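(* Let $\delta\in(0,1/2)$ and let $\mathcal{G}$ be a class of functions $\mathcal{Z}\to[-1,1]$. For any $[0,1]$-valued tree $\mathbf{p}$ of depth $n$, any $\mathcal{Z}$-valued tree $\mathbf{z}$ of depth $n$, any $K>0$ and any $\gamma>0$, $$\mathbb{E}\sup_{g\in\mathcal{G}}\Big[\sum_{t:\,\mathbf{p}_t(y)\in[\delta,1-\delta]}\eta(\mathbf{p}_t(y),y_t)g(\mathbf{z}_t(y))-Kg(\mathbf{z}_t(y))^2\Big]\le\frac1\delta\frac{\log\mathcal{N}_\infty(\mathcal{G},\gamma,\mathbf{z})}{\log(1+\frac K8)}+\inf_{\alpha\in(0,\gamma]}\Big\{\frac{4n\alpha}{\delta}+30\sqrt{\frac{2n}{\delta}}\int_\alpha^\gamma\sqrt{\log\mathcal{N}_\infty(\mathcal{G},\rho,\mathbf{z})}\,d\rho+\frac8\delta\int_\alpha^\gamma\log\mathcal{N}_\infty(\mathcal{G},\rho,\mathbf{z})\,d\rho\Big\},$$ where the process $y_1,\dots,y_n$ is defined by $y_t\mid y_1,\dots,y_{t-1}\sim\mathrm{Bernoulli}(\mathbf{p}_t(y_1,\dots,y_{t-1}))$.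
   Context: A $\mathcal{Z}$-valued tree $\mathbf{z}$ of depth $n$ is a sequence of maps $\mathbf{z}_t:\{0,1\}^{t-1}\to\mathcal{Z}$, $t=1,\dots,n$; for $y\in\{0,1\}^n$, $\mathbf{z}_t(y)=\mathbf{z}_t(y_1,\dots,y_{t-1})$. $\eta(p,a)=-\mathbf{1}\{a=1\}p^{-1}+\mathbf{1}\{a=0\}(1-p)^{-1}$. Sequential covering number: a set $V$ of $\mathbb{R}$-valued trees of depth $n$ is a sequential $\gamma$-cover (in $\ell_\infty$) of $\mathcal{G}\subseteq\mathbb{R}^{\mathcal{Z}}$ on $\mathbf{z}$ if for every $g\in\mathcal{G}$ and every $y\in\{0,1\}^n$ there is $\mathbf{v}\in V$ with $\max_{1\le t\le n}|\mathbf{v}_t(y)-g(\mathbf{z}_t(y))|\le\gamma$; $\mathcal{N}_\infty(\mathcal{G},\gamma,\mathbf{z})$ denotes the size of the smallest such cover. *)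

theory Defs
  imports "HOL-Analysis.Analysis"
begin

text \<open>A tree of depth n with values in 'a is represented as a function
  x :: nat => bool list => 'a, where for t in {1..n} the map x_t is
  x t applied to a prefix (y_1,...,y_(t-1)) given as a list of length t-1.
  Booleans encode {0,1} (True = 1).\<close>

definition tree_at :: "(nat \<Rightarrow> bool list \<Rightarrow> 'a) \<Rightarrow> nat \<Rightarrow> bool list \<Rightarrow> 'a" where
  "tree_at x t y = x t (take (t - 1) y)"

definition eta :: "real \<Rightarrow> bool \<Rightarrow> real" where
  "eta p a = (if a then - inverse p else inverse (1 - p))"

definition seq_cover ::
  "nat \<Rightarrow> (nat \<Rightarrow> bool list \<Rightarrow> real) set \<Rightarrow> ('z \<Rightarrow> real) set \<Rightarrow> real
     \<Rightarrow> (nat \<Rightarrow> bool list \<Rightarrow> 'z) \<Rightarrow> bool" where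
  "seq_cover n V G \<gamma> z \<longleftrightarrow>
     (\<forall>g\<in>G. \<forall>y::bool list. length y = n \<longrightarrow>
        (\<exists>v\<in>V. \<forall>t\<in>{1..n}. \<bar>tree_at v t y - g (tree_at z t y)\<bar> \<le> \<gamma>))"

definition seq_cov_num ::
  "nat \<Rightarrow> ('z \<Rightarrow> real) set \<Rightarrow> real \<Rightarrow> (nat \<Rightarrow> bool list \<Rightarrow> 'z) \<Rightarrow> nat" where
  "seq_cov_num n G \<gamma> z = (LEAST k. \<exists>V. finite V \<and> card V = k \<and> seq_cover n V G \<gamma> z)"

definition path_prob :: "nat \<Rightarrow> (nat \<Rightarrow> bool list \<Rightarrow> real) \<Rightarrow> bool list \<Rightarrow> real" where
  "path_prob n p y = (\<Prod>t\<in>{1..n}. if y ! (t - 1) then tree_at p t y else 1 - tree_at p t y)"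

definition tree_expect :: "nat \<Rightarrow> (nat \<Rightarrow> bool list \<Rightarrow> real) \<Rightarrow> (bool list \<Rightarrow> real) \<Rightarrow> real" where
  "tree_expect n p F = (\<Sum>y\<in>{y::bool list. length y = n}. path_prob n p y * F y)"

end

theory Submission
  imports Defs
begin


lemma lists_Suc_eq:
  "{y::bool list. length y = Suc n} = (\<lambda>(y,b). y @ [b]) ` ({y. length y = n} \<times> UNIV)"
proof (rule set_eqI, rule iffI)
  fix x :: "bool list" assume "x \<in> {y. length y = Suc n}"
  then have ne: "x \<noteq> []" and lx: "length x = Suc n" by auto
  show "x \<in> (\<lambda>(y,b). y @ [b]) ` ({y. length y = n} \<times> UNIV)"
    by (rule image_eqI[where x="(butlast x, last x)"]) (use ne lx in simp_all)
qed auto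

lemma inj_snoc: "inj_on (\<lambda>(y::bool list,b::bool). y @ [b]) A"
  by (auto simp: inj_on_def)

lemma finite_len: "finite {y::bool list. length y = n}"
  using finite_lists_length_eq[of "UNIV::bool set" n] by simp

lemma tree_at_snoc:
  assumes "length y = n" "t \<le> Suc n"
  shows "tree_at x t (y @ [b]) = tree_at x t y"
  using assms by (simp add: tree_at_def)

lemma path_prob_snoc:
  assumes "length y = n"
  shows "path_prob (Suc n) p (y @ [b]) = path_prob n p y * (if b then p (Suc n) y else 1 - p (Suc n) y)"
proof -
  have "path_prob (Suc n) p (y @ [b]) =
     (\<Prod>t\<in>{1..n}. if (y@[b]) ! (t - 1) then tree_at p t (y@[b]) else 1 - tree_at p t (y@[b])) *
     (if (y@[b]) ! n then tree_at p (Suc n) (y@[b]) else 1 - tree_at p (Suc n) (y@[b]))"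
  proof -
    have e: "{1..Suc n} = insert (Suc n) {1..n}" by auto
    have "Suc n \<notin> {1..n}" by simp
    then show ?thesis unfolding path_prob_def e
      by (subst prod.insert) (simp_all only: finite_atLeastAtMost mult.commute diff_Suc_1 not_False_eq_True)
  qed
  also have "(\<Prod>t\<in>{1..n}. if (y@[b]) ! (t - 1) then tree_at p t (y@[b]) else 1 - tree_at p t (y@[b]))
      = path_prob n p y"
    unfolding path_prob_def
    by (rule prod.cong) (use assms in \<open>auto simp: tree_at_snoc nth_append\<close>)
  finally show ?thesis using assms by (simp add: tree_at_def nth_append)
qed

lemma tree_expect_Suc:
  "tree_expect (Suc n) p F = tree_expect n p (\<lambda>y. p (Suc n) y * F (y @ [True]) + (1 - p (Suc n) y) * F (y @ [False]))"
proof -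
  have "tree_expect (Suc n) p F = (\<Sum>yb\<in>{y. length y = n} \<times> UNIV. path_prob (Suc n) p (fst yb @ [snd yb]) * F (fst yb @ [snd yb]))"
    unfolding tree_expect_def lists_Suc_eq
    by (subst sum.reindex[OF inj_snoc]) (simp add: case_prod_beta)
  also have "\<dots> = (\<Sum>y\<in>{y. length y = n}. \<Sum>b\<in>UNIV. path_prob (Suc n) p (y @ [b]) * F (y @ [b]))"
    by (subst sum.cartesian_product) (simp add: case_prod_beta)
  also have "\<dots> = (\<Sum>y\<in>{y. length y = n}. path_prob n p y * (p (Suc n) y * F (y @ [True]) + (1 - p (Suc n) y) * F (y @ [False])))"
    by (rule sum.cong) (auto simp: UNIV_bool path_prob_snoc algebra_simps)
  finally show ?thesis unfolding tree_expect_def .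
qed

lemma tree_expect_cong:
  "(\<And>y. length y = n \<Longrightarrow> F y = H y) \<Longrightarrow> tree_expect n p F = tree_expect n p H"
  unfolding tree_expect_def by (rule sum.cong) auto

lemma path_prob_nonneg:
  assumes "\<forall>t\<in>{1..n}. \<forall>u::bool list. length u = t - 1 \<longrightarrow> 0 \<le> p t u \<and> p t u \<le> 1"
    and "length y = n"
  shows "0 \<le> path_prob n p y"
  unfolding path_prob_def tree_at_def
  by (rule prod_nonneg) (use assms in auto)

lemma tree_expect_mono:
  assumes "\<forall>t\<in>{1..n}. \<forall>u::bool list. length u = t - 1 \<longrightarrow> 0 \<le> p t u \<and> p t u \<le> 1"
    and "\<And>y. length y = n \<Longrightarrow> F y \<le> H y"
  shows "tree_expect n p F \<le> tree_expect n p H"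
  unfolding tree_expect_def
  by (rule sum_mono) (use assms path_prob_nonneg in \<open>auto intro: mult_left_mono\<close>)

lemma tree_expect_add:
  "tree_expect n p (\<lambda>y. F y + H y) = tree_expect n p F + tree_expect n p H"
  unfolding tree_expect_def by (simp add: distrib_left sum.distrib)

lemma tree_expect_cmult:
  "tree_expect n p (\<lambda>y. c * F y) = c * tree_expect n p F"
  unfolding tree_expect_def by (simp add: sum_distrib_left algebra_simps)

lemma tree_expect_sum:
  "tree_expect n p (\<lambda>y. \<Sum>i\<in>I. F i y) = (\<Sum>i\<in>I. tree_expect n p (F i))"
  unfolding tree_expect_def by (simp add: sum_distrib_left sum.swap[of _ I])

lemma tree_expect_const: "tree_expect n p (\<lambda>_. c) = c"
proof (induction n)
  case 0
  have "{y::bool list. length y = 0} = {[]}" by auto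
  then show ?case by (simp add: tree_expect_def path_prob_def)
next
  case (Suc n)
  then show ?case by (simp add: tree_expect_Suc algebra_simps)
qed



lemma sum_snoc_eq:
  assumes "length y = n"
  shows "(\<Sum>t\<in>{1..Suc n}. f t (take (t-1) (y@[b])) ((y@[b])!(t-1)))
       = (\<Sum>t\<in>{1..n}. f t (take (t-1) y) (y!(t-1))) + f (Suc n) y b"
proof -
  have e: "{1..Suc n} = insert (Suc n) {1..n}" by auto
  have "(\<Sum>t\<in>{1..n}. f t (take (t-1) (y@[b])) ((y@[b])!(t-1))) = (\<Sum>t\<in>{1..n}. f t (take (t-1) y) (y!(t-1)))"
    by (rule sum.cong) (use assms in \<open>auto simp: nth_append\<close>)
  then show ?thesis unfolding e using assms by (simp add: nth_append add.commute)
qed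

lemma exp_supermart:
  assumes p01: "\<forall>t\<in>{1..n}. \<forall>u::bool list. length u = t - 1 \<longrightarrow> 0 \<le> p t u \<and> p t u \<le> 1"
    and step: "\<forall>t\<in>{1..n}. \<forall>u::bool list. length u = t - 1 \<longrightarrow>
        p t u * exp (f t u True) + (1 - p t u) * exp (f t u False) \<le> exp \<kappa>"
  shows "tree_expect n p (\<lambda>y. exp (\<Sum>t\<in>{1..n}. f t (take (t-1) y) (y!(t-1)))) \<le> exp (real n * \<kappa>)"
  using assms
proof (induction n)
  case 0
  then show ?case by (simp add: tree_expect_const)
next
  case (Suc n)
  have p01': "\<forall>t\<in>{1..n}. \<forall>u::bool list. length u = t - 1 \<longrightarrow> 0 \<le> p t u \<and> p t u \<le> 1"
    using Suc.prems(1) by auto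
  have step': "\<forall>t\<in>{1..n}. \<forall>u::bool list. length u = t - 1 \<longrightarrow>
        p t u * exp (f t u True) + (1 - p t u) * exp (f t u False) \<le> exp \<kappa>"
    using Suc.prems(2) by auto
  define A where "A y = (\<Sum>t\<in>{1..n}. f t (take (t-1) y) (y!(t-1)))" for y
  have "tree_expect (Suc n) p (\<lambda>y. exp (\<Sum>t\<in>{1..Suc n}. f t (take (t-1) y) (y!(t-1))))
      = tree_expect n p (\<lambda>y. exp (A y) * (p (Suc n) y * exp (f (Suc n) y True) + (1 - p (Suc n) y) * exp (f (Suc n) y False)))"
    unfolding tree_expect_Suc
  proof (rule tree_expect_cong)
    fix y :: "bool list" assume "length y = n"
    then have h: "\<And>b. (\<Sum>t\<in>{1..Suc n}. f t (take (t-1) (y@[b])) ((y@[b])!(t-1))) = A y + f (Suc n) y b"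
      using sum_snoc_eq[of y n f] by (simp add: A_def)
    show "p (Suc n) y * exp (\<Sum>t\<in>{1..Suc n}. f t (take (t-1) (y@[True])) ((y@[True])!(t-1)))
        + (1 - p (Suc n) y) * exp (\<Sum>t\<in>{1..Suc n}. f t (take (t-1) (y@[False])) ((y@[False])!(t-1)))
        = exp (A y) * (p (Suc n) y * exp (f (Suc n) y True) + (1 - p (Suc n) y) * exp (f (Suc n) y False))"
      unfolding h exp_add by (simp add: algebra_simps)
  qed
  also have "\<dots> \<le> tree_expect n p (\<lambda>y. exp \<kappa> * exp (A y))"
  proof (rule tree_expect_mono[OF p01'])
    fix y :: "bool list" assume "length y = n"
    then have "p (Suc n) y * exp (f (Suc n) y True) + (1 - p (Suc n) y) * exp (f (Suc n) y False) \<le> exp \<kappa>"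
      using Suc.prems(2) by auto
    then show "exp (A y) * (p (Suc n) y * exp (f (Suc n) y True) + (1 - p (Suc n) y) * exp (f (Suc n) y False)) \<le> exp \<kappa> * exp (A y)"
      by (simp add: mult.commute)
  qed
  also have "\<dots> = exp \<kappa> * tree_expect n p (\<lambda>y. exp (A y))" by (rule tree_expect_cmult)
  also have "\<dots> \<le> exp \<kappa> * exp (real n * \<kappa>)"
    using Suc.IH[OF p01' step'] unfolding A_def by simp
  also have "\<dots> = exp (real (Suc n) * \<kappa>)" by (simp add: exp_add[symmetric] algebra_simps)
  finally show ?case .
qed

lemma tree_expect_divide:
  "tree_expect n p (\<lambda>y. F y / c) = tree_expect n p F / c"
  unfolding tree_expect_def by (simp add: sum_divide_distrib)

lemma finite_max_bound:
  assumes p01: "\<forall>t\<in>{1..n}. \<forall>u::bool list. length u = t - 1 \<longrightarrow> 0 \<le> p t u \<and> p t u \<le> 1"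
    and W: "finite W" "W \<noteq> {}" and lam: "l > 0"
    and E: "\<forall>w\<in>W. tree_expect n p (\<lambda>y. exp (l * X w y)) \<le> exp C"
  shows "tree_expect n p (\<lambda>y. Max ((\<lambda>w. X w y) ` W)) \<le> (ln (real (card W)) + C) / l"
proof -
  define A where "A = real (card W) * exp C"
  have cW: "real (card W) > 0" using W by (simp add: card_gt_0_iff)
  have Apos: "A > 0" unfolding A_def using cW by simp
  have pt: "l * Max ((\<lambda>w. X w y) ` W) \<le> (1 / A) * (\<Sum>w\<in>W. exp (l * X w y)) + (ln A - 1)" for y
  proof -
    have "Max ((\<lambda>w. X w y) ` W) \<in> (\<lambda>w. X w y) ` W" using W by (intro Max_in) auto
    then obtain w0 where w0: "w0 \<in> W" "Max ((\<lambda>w. X w y) ` W) = X w0 y" by auto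
    define s where "s = (\<Sum>w\<in>W. exp (l * X w y))"
    have "exp (l * X w0 y) \<le> s" unfolding s_def
      by (rule member_le_sum) (use w0 W in auto)
    moreover have "0 < exp (l * X w0 y)" by simp
    ultimately have spos: "s > 0" by linarith
    have "l * X w0 y \<le> ln s"
    proof -
      have "ln (exp (l * X w0 y)) \<le> ln s"
        using \<open>exp (l * X w0 y) \<le> s\<close> spos by (subst ln_le_cancel_iff) auto
      then show ?thesis by simp
    qed
    also have "ln s = ln (s / A) + ln A" using spos Apos by (simp add: ln_div)
    also have "ln (s / A) \<le> s / A - 1" using spos Apos by (intro ln_le_minus_one) simp
    finally show ?thesis using w0 unfolding s_def by simp
  qed
  have "l * tree_expect n p (\<lambda>y. Max ((\<lambda>w. X w y) ` W))
      = tree_expect n p (\<lambda>y. l * Max ((\<lambda>w. X w y) ` W))" by (simp add: tree_expect_cmult)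
  also have "\<dots> \<le> tree_expect n p (\<lambda>y. (1 / A) * (\<Sum>w\<in>W. exp (l * X w y)) + (ln A - 1))"
    by (rule tree_expect_mono[OF p01]) (rule pt)
  also have "\<dots> = (1 / A) * (\<Sum>w\<in>W. tree_expect n p (\<lambda>y. exp (l * X w y))) + (ln A - 1)"
    by (simp add: tree_expect_add tree_expect_cmult tree_expect_const tree_expect_sum tree_expect_divide)
  also have "\<dots> \<le> (1 / A) * (\<Sum>w\<in>W. exp C) + (ln A - 1)"
    using E Apos by (intro add_right_mono mult_left_mono sum_mono) auto
  also have "\<dots> = ln A" unfolding A_def using cW by simp
  also have "\<dots> = ln (real (card W)) + C" unfolding A_def using cW by (simp add: ln_mult)
  finally show ?thesis using lam by (simp add: field_simps mult.commute)
qed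



lemma exp_mul_one_minus: "exp u * (1 - u) \<le> (1::real)"
proof -
  have "1 - u \<le> exp (-u)" using exp_ge_add_one_self[of "-u"] by simp
  then have "exp u * (1 - u) \<le> exp u * exp (-u)" by (intro mult_left_mono) auto
  then show ?thesis by (simp add: exp_minus)
qed

lemma exp_quad:
  fixes u A :: real
  assumes "u \<le> A" "A > 0"
  shows "exp u \<le> 1 + u + u\<^sup>2 * ((exp A - 1) / A)"
proof -
  have key: "exp u - 1 - u \<le> u * (exp u - 1)"
    using exp_mul_one_minus[of u] by (simp add: algebra_simps)
  have psi1: "(exp A - 1) / A \<ge> 1"
    using exp_ge_add_one_self[of A] assms(2) by (simp add: field_simps)
  show ?thesis
  proof (cases "u \<ge> 0")
    case True
    define t where "t = u / A"
    have t01: "0 \<le> t" "t \<le> 1" using True assms by (auto simp: t_def field_simps)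
    have "exp ((1 - t) * 0 + t * A) \<le> (1 - t) * exp 0 + t * exp A"
      using convex_onD[OF exp_convex, of t 0 A] t01 by simp
    moreover have "t * A = u" using assms by (simp add: t_def)
    ultimately have c: "exp u - 1 \<le> t * (exp A - 1)" by (simp add: algebra_simps)
    have "u * (exp u - 1) \<le> u * (t * (exp A - 1))" using c True by (intro mult_left_mono) auto
    also have "\<dots> = u\<^sup>2 * ((exp A - 1) / A)" by (simp add: t_def power2_eq_square)
    finally show ?thesis using key by simp
  next
    case False
    have "exp u - 1 \<ge> u" using exp_ge_add_one_self[of u] by linarith
    then have "u * (exp u - 1) \<le> u * u" using False by (intro mult_left_mono_neg) auto
    also have "u * u \<le> u\<^sup>2 * ((exp A - 1) / A)"
    proof -
      have "u\<^sup>2 * 1 \<le> u\<^sup>2 * ((exp A - 1) / A)" by (rule mult_left_mono[OF psi1]) simp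
      then show ?thesis by (simp add: power2_eq_square)
    qed
    finally show ?thesis using key by simp
  qed
qed

lemma exp_three_halves: "exp (3/2 :: real) \<le> 11/2"
proof -
  have "7/8 \<le> exp (-(1/8::real))" using exp_ge_add_one_self[of "-(1/8::real)"] by simp
  then have "exp (1/8::real) \<le> 8/7"
    by (simp add: exp_minus field_simps)
  then have "exp (1/8::real) ^ 12 \<le> (8/7) ^ 12" by (intro power_mono) auto
  moreover have "exp (3/2::real) = exp (1/8) ^ 12"
    using exp_of_nat_mult[of 12 "1/8::real"] by simp
  moreover have "(8/7::real) ^ 12 \<le> 11/2" by (simp add: power_divide)
  ultimately show ?thesis by linarith
qed

lemma exp_quad32:
  fixes u :: real
  assumes "u \<le> 3/2"
  shows "exp u \<le> 1 + u + 3 * u\<^sup>2"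
proof -
  have "(exp (3/2) - 1) / (3/2::real) \<le> 3" using exp_three_halves by simp
  then have "u\<^sup>2 * ((exp (3/2) - 1) / (3/2::real)) \<le> u\<^sup>2 * 3" by (intro mult_left_mono) auto
  then show ?thesis using exp_quad[OF assms] by simp
qed

lemma pq_bound:
  fixes p \<delta> :: real
  assumes "0 < \<delta>" "\<delta> < 1/2" "\<delta> \<le> p" "p \<le> 1 - \<delta>"
  shows "1 / p + 1 / (1 - p) \<le> 2 / \<delta>"
proof -
  have "(p - \<delta>) * (1 - \<delta> - p) \<ge> 0" using assms by (intro mult_nonneg_nonneg) auto
  then have h: "p * (1 - p) \<ge> \<delta> * (1 - \<delta>)" by (simp add: algebra_simps)
  have "\<delta> * \<delta> \<le> \<delta> * (1/2)" using assms by (intro mult_left_mono) auto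
  then have "\<delta> * (1 - \<delta>) \<ge> \<delta> / 2" by (simp add: algebra_simps)
  with h have h2: "p * (1 - p) \<ge> \<delta> / 2" by linarith
  have pp: "p > 0" "1 - p > 0" using assms by auto
  have "1 / p + 1 / (1 - p) = 1 / (p * (1 - p))" using pp by (simp add: field_simps)
  also have "\<dots> \<le> 1 / (\<delta> / 2)" using h2 assms by (intro divide_left_mono) auto
  finally show ?thesis by simp
qed

lemma step_chain:
  fixes p \<delta> x b l :: real
  assumes "0 < \<delta>" "\<delta> < 1/2" "\<delta> \<le> p" "p \<le> 1 - \<delta>" "\<bar>x\<bar> \<le> b" "0 < l" "l * b \<le> 3/2 * \<delta>"
  shows "p * exp (l * (eta p True * x)) + (1 - p) * exp (l * (eta p False * x)) \<le> exp (6 * l\<^sup>2 * b\<^sup>2 / \<delta>)"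
proof -
  have pp: "p > 0" "1 - p > 0" using assms by auto
  define u1 where "u1 = l * (eta p True * x)"
  define u0 where "u0 = l * (eta p False * x)"
  have u1e: "u1 = - (l * x) / p" unfolding u1_def eta_def using pp by (simp add: field_simps)
  have u0e: "u0 = (l * x) / (1 - p)" unfolding u0_def eta_def using pp by (simp add: field_simps)
  have lx: "\<bar>l * x\<bar> \<le> l * b" using assms by (simp add: abs_mult mult_left_mono)
  have "\<bar>u1\<bar> \<le> 3/2"
  proof -
    have "\<bar>u1\<bar> = \<bar>l * x\<bar> / p" using u1e pp by (simp add: abs_div)
    also have "\<dots> \<le> (3/2 * \<delta>) / p" using lx assms pp by (intro divide_right_mono) auto
    also have "\<dots> \<le> (3/2 * \<delta>) / \<delta>" using assms pp by (intro divide_left_mono) auto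
    finally show ?thesis using assms by simp
  qed
  have "\<bar>u0\<bar> \<le> 3/2"
  proof -
    have "\<bar>u0\<bar> = \<bar>l * x\<bar> / (1 - p)" using u0e pp by (simp add: abs_div)
    also have "\<dots> \<le> (3/2 * \<delta>) / (1 - p)" using lx assms pp by (intro divide_right_mono) auto
    also have "\<dots> \<le> (3/2 * \<delta>) / \<delta>" using assms pp by (intro divide_left_mono) auto
    finally show ?thesis using assms by simp
  qed
  have e1: "exp u1 \<le> 1 + u1 + 3 * u1\<^sup>2" using \<open>\<bar>u1\<bar> \<le> 3/2\<close> by (intro exp_quad32) auto
  have e0: "exp u0 \<le> 1 + u0 + 3 * u0\<^sup>2" using \<open>\<bar>u0\<bar> \<le> 3/2\<close> by (intro exp_quad32) auto
  have "p * exp u1 + (1 - p) * exp u0 \<le> p * (1 + u1 + 3 * u1\<^sup>2) + (1 - p) * (1 + u0 + 3 * u0\<^sup>2)"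
    using e1 e0 pp by (intro add_mono mult_left_mono) auto
  also have "\<dots> = 1 + 3 * (l * x)\<^sup>2 * (1 / p + 1 / (1 - p))"
  proof -
    have a1: "p * u1 = -(l*x)" "(1-p)*u0 = l*x" using pp unfolding u1e u0e by simp_all
    have a2: "p * u1\<^sup>2 = (l*x)\<^sup>2/p" "(1-p)*u0\<^sup>2 = (l*x)\<^sup>2/(1-p)"
      using pp unfolding u1e u0e by (simp_all add: power2_eq_square)
    have "p * (1 + u1 + 3 * u1\<^sup>2) + (1 - p) * (1 + u0 + 3 * u0\<^sup>2)
        = (p + (1-p)) + (p*u1 + (1-p)*u0) + 3*(p*u1\<^sup>2 + (1-p)*u0\<^sup>2)" by (simp add: algebra_simps)
    also have "\<dots> = 1 + 3 * (l * x)\<^sup>2 * (1 / p + 1 / (1 - p))" unfolding a1 a2 by (simp add: algebra_simps)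
    finally show ?thesis .
  qed
  also have "\<dots> \<le> 1 + 3 * (l * b)\<^sup>2 * (2 / \<delta>)"
  proof -
    have "\<bar>l * x\<bar>\<^sup>2 \<le> (l * b)\<^sup>2" by (rule power_mono[OF lx]) simp
    then have "(l * x)\<^sup>2 \<le> (l * b)\<^sup>2" by simp
    moreover have "1 / p + 1 / (1 - p) \<le> 2 / \<delta>" using pq_bound assms by blast
    moreover have "0 \<le> 1 / p + 1 / (1 - p)" using pp by simp
    ultimately have "3 * (l * x)\<^sup>2 * (1 / p + 1 / (1 - p)) \<le> 3 * (l * b)\<^sup>2 * (2 / \<delta>)"
      by (intro mult_mono) auto
    then show ?thesis by linarith
  qed
  also have "\<dots> = 1 + 6 * l\<^sup>2 * b\<^sup>2 / \<delta>" by (simp add: power_mult_distrib)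
  also have "\<dots> \<le> exp (6 * l\<^sup>2 * b\<^sup>2 / \<delta>)" by (rule exp_ge_add_one_self[simplified add.commute])
  finally show ?thesis unfolding u1_def u0_def .
qed

lemma step_top:
  fixes p \<delta> x K :: real
  assumes "0 < \<delta>" "\<delta> < 1/2" "\<delta> \<le> p" "p \<le> 1 - \<delta>" "\<bar>x\<bar> \<le> 1" "0 < K"
  shows "p * exp (\<delta> * ln (1 + K/8) * (eta p True * x - K * x\<^sup>2))
       + (1 - p) * exp (\<delta> * ln (1 + K/8) * (eta p False * x - K * x\<^sup>2)) \<le> 1"
proof -
  define a where "a = ln (1 + K/8)"
  define l where "l = \<delta> * a"
  have a0: "a > 0" unfolding a_def using assms by simp
  have ea: "exp a - 1 = K / 8" unfolding a_def using assms by simp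
  have l0: "l > 0" unfolding l_def using a0 assms by simp
  have pp: "p > 0" "1 - p > 0" using assms by auto
  define u1 where "u1 = l * (eta p True * x)"
  define u0 where "u0 = l * (eta p False * x)"
  have u1e: "u1 = - (l * x) / p" unfolding u1_def eta_def using pp by (simp add: field_simps)
  have u0e: "u0 = (l * x) / (1 - p)" unfolding u0_def eta_def using pp by (simp add: field_simps)
  have lx: "\<bar>l * x\<bar> \<le> l" using assms l0 by (simp add: abs_mult mult_left_le)
  have "\<bar>u1\<bar> \<le> a"
  proof -
    have "\<bar>u1\<bar> = \<bar>l * x\<bar> / p" using u1e pp by (simp add: abs_div)
    also have "\<dots> \<le> l / p" using lx assms pp by (intro divide_right_mono) auto
    also have "\<dots> \<le> l / \<delta>" using assms pp l0 by (intro divide_left_mono) auto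
    finally show ?thesis using assms by (simp add: l_def)
  qed
  have "\<bar>u0\<bar> \<le> a"
  proof -
    have "\<bar>u0\<bar> = \<bar>l * x\<bar> / (1 - p)" using u0e pp by (simp add: abs_div)
    also have "\<dots> \<le> l / (1 - p)" using lx assms pp by (intro divide_right_mono) auto
    also have "\<dots> \<le> l / \<delta>" using assms pp l0 by (intro divide_left_mono) auto
    finally show ?thesis using assms by (simp add: l_def)
  qed
  define c where "c = K / (8 * a)"
  have c0: "c > 0" unfolding c_def using a0 assms by simp
  have e1: "exp u1 \<le> 1 + u1 + u1\<^sup>2 * c"
    using exp_quad[of u1 a] \<open>\<bar>u1\<bar> \<le> a\<close> a0 ea by (simp add: c_def)
  have e0: "exp u0 \<le> 1 + u0 + u0\<^sup>2 * c"
    using exp_quad[of u0 a] \<open>\<bar>u0\<bar> \<le> a\<close> a0 ea by (simp add: c_def)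
  have "p * exp u1 + (1 - p) * exp u0 \<le> p * (1 + u1 + u1\<^sup>2 * c) + (1 - p) * (1 + u0 + u0\<^sup>2 * c)"
    using e1 e0 pp by (intro add_mono mult_left_mono) auto
  also have "\<dots> = 1 + c * (l * x)\<^sup>2 * (1 / p + 1 / (1 - p))"
  proof -
    have a1: "p * u1 = -(l*x)" "(1-p)*u0 = l*x" using pp unfolding u1e u0e by simp_all
    have a2: "p * u1\<^sup>2 = (l*x)\<^sup>2/p" "(1-p)*u0\<^sup>2 = (l*x)\<^sup>2/(1-p)"
      using pp unfolding u1e u0e by (simp_all add: power2_eq_square)
    have "p * (1 + u1 + u1\<^sup>2 * c) + (1 - p) * (1 + u0 + u0\<^sup>2 * c)
        = (p + (1-p)) + (p*u1 + (1-p)*u0) + c*(p*u1\<^sup>2 + (1-p)*u0\<^sup>2)" by (simp add: algebra_simps)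
    also have "\<dots> = 1 + c * (l * x)\<^sup>2 * (1 / p + 1 / (1 - p))" unfolding a1 a2 by (simp add: algebra_simps)
    finally show ?thesis .
  qed
  also have "\<dots> \<le> 1 + c * (l * x)\<^sup>2 * (2 / \<delta>)"
    using pq_bound[OF assms(1-4)] c0 by (intro add_left_mono mult_left_mono) auto
  also have "c * (l * x)\<^sup>2 * (2 / \<delta>) = (l * K * x\<^sup>2) / 4"
    unfolding c_def l_def using a0 assms by (simp add: field_simps power2_eq_square)
  also have "1 + (l * K * x\<^sup>2) / 4 \<le> exp (l * K * x\<^sup>2)"
  proof -
    have "0 \<le> l * K * x\<^sup>2" using l0 assms by simp
    then have "1 + (l * K * x\<^sup>2) / 4 \<le> 1 + l * K * x\<^sup>2" by linarith
    also have "\<dots> \<le> exp (l * K * x\<^sup>2)" by (rule exp_ge_add_one_self[simplified add.commute])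
    finally show ?thesis .
  qed
  finally have main: "p * exp u1 + (1 - p) * exp u0 \<le> exp (l * K * x\<^sup>2)" .
  have "p * exp (l * (eta p True * x - K * x\<^sup>2)) + (1 - p) * exp (l * (eta p False * x - K * x\<^sup>2))
      = exp (- (l * K * x\<^sup>2)) * (p * exp u1 + (1 - p) * exp u0)"
    unfolding u1_def u0_def by (simp add: right_diff_distrib exp_diff exp_minus field_simps)
  also have "\<dots> \<le> exp (- (l * K * x\<^sup>2)) * exp (l * K * x\<^sup>2)"
    using main by (intro mult_left_mono) auto
  also have "\<dots> = 1" by (simp add: exp_minus)
  finally show ?thesis unfolding l_def a_def .
qed

lemma opt_bound:
  fixes X L V Lam :: real
  assumes "L \<ge> 0" "V \<ge> 0" "Lam > 0"
    and H: "\<And>l. 0 < l \<Longrightarrow> l \<le> Lam \<Longrightarrow> X \<le> L / l + l * V"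
  shows "X \<le> 2 * sqrt (V * L) + L / Lam"
proof (cases "L = 0")
  case True
  have "X \<le> 0"
  proof (rule ccontr)
    assume "\<not> X \<le> 0"
    then have X0: "X > 0" by simp
    define l where "l = min Lam (X / (2 * (V + 1)))"
    have l0: "l > 0" unfolding l_def using X0 assms by simp
    have "X \<le> l * V" using H[OF l0] True by (simp add: l_def)
    also have "\<dots> \<le> (X / (2 * (V + 1))) * V" unfolding l_def using assms by (intro mult_right_mono) auto
    also have "\<dots> = X * (V / (2 * (V + 1)))" by simp
    also have "\<dots> < X * 1"
    proof (rule mult_strict_left_mono[OF _ X0])
      show "V / (2 * (V + 1)) < 1" using assms by (simp add: field_simps)
    qed
    also have "\<dots> = X" by simp
    finally show False by simp
  qed
  then show ?thesis using True by simp
next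
  case False
  then have L0: "L > 0" using assms by simp
  show ?thesis
  proof (cases "V > 0 \<and> sqrt (L / V) \<le> Lam")
    case True
    define l where "l = sqrt (L / V)"
    have l0: "l > 0" unfolding l_def using True L0 by simp
    have "X \<le> L / l + l * V" using H[OF l0] True by (simp add: l_def)
    have sL: "sqrt L * sqrt L = L" using L0 by simp
    have sV: "sqrt V * sqrt V = V" using True by simp
    have sLp: "sqrt L > 0" using L0 by simp
    have sVp: "sqrt V > 0" using True by simp
    have lq: "l = sqrt L / sqrt V" unfolding l_def by (simp add: real_sqrt_divide)
    have svl: "sqrt (V * L) = sqrt L * sqrt V" by (simp add: real_sqrt_mult)
    have "L / l = (L / sqrt L) * sqrt V" unfolding lq by simp
    also have "L / sqrt L = sqrt L" using L0 by (simp add: real_div_sqrt)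
    finally have e1: "L / l = sqrt (V * L)" using svl by simp
    have "l * V = sqrt L * (V / sqrt V)" unfolding lq by simp
    also have "V / sqrt V = sqrt V" using True by (simp add: real_div_sqrt)
    finally have e2: "l * V = sqrt (V * L)" using svl by simp
    note \<open>X \<le> L / l + l * V\<close>
    also note e1
    also note e2
    finally have "X \<le> 2 * sqrt (V * L)" by simp
    then show ?thesis using L0 assms by (smt (verit) divide_nonneg_pos)
  next
    case F2: False
    have XL: "X \<le> L / Lam + Lam * V" using H[OF assms(3)] by simp
    have LV: "Lam * V \<le> sqrt (V * L)"
    proof (cases "V > 0")
      case True
      then have "Lam < sqrt (L / V)" using F2 by simp
      then have "Lam\<^sup>2 < (sqrt (L / V))\<^sup>2" using assms by (intro power_strict_mono) auto
      then have "Lam\<^sup>2 < L / V" using True assms by simp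
      then have "Lam\<^sup>2 * V < L" using True by (simp add: field_simps)
      then have "(Lam * V)\<^sup>2 \<le> V * L" using True by (simp add: power2_eq_square field_simps mult_left_mono)
      then show ?thesis using assms True by (meson real_le_rsqrt)
    next
      case False
      then show ?thesis using assms by simp
    qed
    have "0 \<le> sqrt (V * L)" using assms by simp
    then show ?thesis using XL LV by linarith
  qed
qed



lemma seq_cover_mono:
  "seq_cover n V G r z \<Longrightarrow> r \<le> r' \<Longrightarrow> seq_cover n V G r' z"
  unfolding seq_cover_def by (meson order_trans)

lemma cover_exists:
  fixes G :: "('z \<Rightarrow> real) set" and z :: "nat \<Rightarrow> bool list \<Rightarrow> 'z"
  assumes Gb: "\<forall>g\<in>G. \<forall>x. \<bar>g x\<bar> \<le> 1" and r: "r > 0"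
  shows "\<exists>V. finite V \<and> seq_cover n V G r z"
proof -
  define D where "D = {(t, u::bool list). t \<in> {1..n} \<and> length u = t - 1}"
  define M where "M = \<lceil>1 / r\<rceil>"
  define R where "R = (\<lambda>k. real_of_int k * r) ` {-M..M}"
  define mk where "mk f = (\<lambda>t u. if (t, u) \<in> D then f (t, u) else 0)" for f :: "nat \<times> bool list \<Rightarrow> real"
  define V where "V = mk ` (PiE D (\<lambda>_. R))"
  have fD: "finite D"
  proof (rule finite_subset)
    show "D \<subseteq> {1..n} \<times> {u::bool list. set u \<subseteq> UNIV \<and> length u \<le> n}" unfolding D_def by auto
    show "finite ({1..n} \<times> {u::bool list. set u \<subseteq> UNIV \<and> length u \<le> n})"
      by (intro finite_cartesian_product finite_lists_length_le) auto
  qed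
  have fR: "finite R" unfolding R_def by simp
  have fV: "finite V" unfolding V_def using fD fR by (intro finite_imageI finite_PiE) auto
  have "seq_cover n V G r z"
    unfolding seq_cover_def
  proof (intro ballI allI impI)
    fix g y assume g: "g \<in> G" and y: "length (y::bool list) = n"
    define q where "q tu = real_of_int \<lfloor>g (z (fst tu) (snd tu)) / r\<rfloor> * r" for tu
    define f where "f = (\<lambda>tu. if tu \<in> D then q tu else undefined)"
    have qR: "q tu \<in> R" for tu
    proof -
      define w where "w = g (z (fst tu) (snd tu))"
      have w1: "\<bar>w\<bar> \<le> 1" using Gb g by (simp add: w_def)
      have "\<lfloor>w / r\<rfloor> \<le> M"
      proof -
        have "w / r \<le> 1 / r" using w1 r by (simp add: divide_right_mono)
        then show ?thesis unfolding M_def by (meson floor_le_ceiling order_trans floor_mono)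
      qed
      moreover have "- M \<le> \<lfloor>w / r\<rfloor>"
      proof -
        have "-1 \<le> w" using w1 by simp
        then have "-1 / r \<le> w / r" using r by (intro divide_right_mono) auto
        then have "- (1 / r) \<le> w / r" by simp
        then have "\<lfloor>- (1 / r)\<rfloor> \<le> \<lfloor>w / r\<rfloor>" by (rule floor_mono)
        then show ?thesis unfolding M_def by (simp add: floor_minus)
      qed
      ultimately show ?thesis unfolding R_def q_def w_def by auto
    qed
    have fP: "f \<in> PiE D (\<lambda>_. R)" unfolding f_def using qR by auto
    show "\<exists>v\<in>V. \<forall>t\<in>{1..n}. \<bar>tree_at v t y - g (tree_at z t y)\<bar> \<le> r"
    proof (intro bexI ballI)
      show "mk f \<in> V" unfolding V_def using fP by simp
      fix t assume t: "t \<in> {1..n}"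
      have inD: "(t, take (t - 1) y) \<in> D" using t y unfolding D_def by auto
      define w where "w = g (z t (take (t - 1) y))"
      have "tree_at (mk f) t y = real_of_int \<lfloor>w / r\<rfloor> * r"
        unfolding tree_at_def mk_def f_def q_def w_def using inD by simp
      moreover have "real_of_int \<lfloor>w / r\<rfloor> * r \<le> w" "w < real_of_int \<lfloor>w / r\<rfloor> * r + r"
      proof -
        have "real_of_int \<lfloor>w / r\<rfloor> \<le> w / r" "w / r < real_of_int \<lfloor>w / r\<rfloor> + 1" by linarith+
        have a: "real_of_int \<lfloor>w / r\<rfloor> * r \<le> (w / r) * r"
          by (rule mult_right_mono) (use r \<open>real_of_int \<lfloor>w / r\<rfloor> \<le> w / r\<close> in auto)
        have b: "(w / r) * r < (real_of_int \<lfloor>w / r\<rfloor> + 1) * r"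
          by (rule mult_strict_right_mono) (use r \<open>w / r < real_of_int \<lfloor>w / r\<rfloor> + 1\<close> in auto)
        show "real_of_int \<lfloor>w / r\<rfloor> * r \<le> w" using a r by simp
        show "w < real_of_int \<lfloor>w / r\<rfloor> * r + r" using b r by (simp add: algebra_simps)
      qed
      ultimately show "\<bar>tree_at (mk f) t y - g (tree_at z t y)\<bar> \<le> r"
        unfolding tree_at_def w_def by simp
    qed
  qed
  with fV show ?thesis by blast
qed

lemma N_props:
  fixes G :: "('z \<Rightarrow> real) set" and z :: "nat \<Rightarrow> bool list \<Rightarrow> 'z"
  assumes Gb: "\<forall>g\<in>G. \<forall>x. \<bar>g x\<bar> \<le> 1" and G0: "G \<noteq> {}" and r: "r > 0"
  shows "\<exists>V. finite V \<and> card V = seq_cov_num n G r z \<and> seq_cover n V G r z"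
    and "seq_cov_num n G r z \<ge> 1"
proof -
  obtain V0 where "finite V0" "seq_cover n V0 G r z" using cover_exists[OF Gb r] by blast
  then have ex: "\<exists>k V. finite V \<and> card V = k \<and> seq_cover n V G r z" by blast
  show ex2: "\<exists>V. finite V \<and> card V = seq_cov_num n G r z \<and> seq_cover n V G r z"
    unfolding seq_cov_num_def using LeastI_ex[OF ex] .
  then obtain V where V: "finite V" "card V = seq_cov_num n G r z" "seq_cover n V G r z" by blast
  obtain g where "g \<in> G" using G0 by blast
  then obtain v where "v \<in> V" using V(3) unfolding seq_cover_def
    by (metis length_replicate)
  then have "V \<noteq> {}" by auto
  then show "seq_cov_num n G r z \<ge> 1" using V(1,2) by (metis One_nat_def Suc_leI card_gt_0_iff)
qed

lemma N_mono:
  fixes G :: "('z \<Rightarrow> real) set" and z :: "nat \<Rightarrow> bool list \<Rightarrow> 'z"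
  assumes Gb: "\<forall>g\<in>G. \<forall>x. \<bar>g x\<bar> \<le> 1" and G0: "G \<noteq> {}" and r: "r > 0" and rr: "r \<le> r'"
  shows "seq_cov_num n G r' z \<le> seq_cov_num n G r z"
proof -
  obtain V where V: "finite V" "card V = seq_cov_num n G r z" "seq_cover n V G r z"
    using N_props(1)[OF Gb G0 r] by blast
  then have "seq_cover n V G r' z" using seq_cover_mono rr by blast
  then have "seq_cov_num n G r' z \<le> card V" unfolding seq_cov_num_def
    by (intro Least_le) (use V(1) in blast)
  then show ?thesis using V(2) by simp
qed

lemma antitone_integrable:
  fixes f :: "real \<Rightarrow> real"
  assumes "\<And>x y. a \<le> x \<Longrightarrow> x \<le> y \<Longrightarrow> y \<le> b \<Longrightarrow> f y \<le> f x"
  shows "f integrable_on {a..b}"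
proof -
  have "mono_on {a..b} (\<lambda>x. - f x)"
    by (rule mono_onI) (use assms in auto)
  then have "(\<lambda>x. - f x) integrable_on {a..b}" by (rule integrable_on_mono_on)
  then show ?thesis using integrable_neg_iff by blast
qed

lemma antitone_integral_lower:
  fixes f :: "real \<Rightarrow> real"
  assumes "\<And>x y. a \<le> x \<Longrightarrow> x \<le> y \<Longrightarrow> y \<le> b \<Longrightarrow> f y \<le> f x" and ab: "a \<le> b"
  shows "(b - a) * f b \<le> integral {a..b} f"
proof -
  have "integral {a..b} (\<lambda>_. f b) \<le> integral {a..b} f"
    by (rule integral_le) (use assms antitone_integrable[OF assms(1)] in auto)
  then show ?thesis using ab by (simp add: content_real)
qed

lemma dyadic_integral_sum:
  fixes f :: "real \<Rightarrow> real" and g :: real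
  assumes "g > 0" and "f integrable_on {g / 2 ^ Suc m..g}"
  shows "(\<Sum>j\<le>m. integral {g / 2 ^ Suc j..g / 2 ^ j} f) = integral {g / 2 ^ Suc m..g} f"
  using assms(2)
proof (induction m)
  case 0
  then show ?case by simp
next
  case (Suc m)
  have le1: "g / 2 ^ Suc (Suc m) \<le> g / 2 ^ Suc m" using assms(1) by (simp add: field_simps)
  have le2: "g / 2 ^ Suc m \<le> g"
  proof -
    have "(1::real) \<le> 2 ^ Suc m" by (rule one_le_power) simp
    then have "g * 1 \<le> g * 2 ^ Suc m" using assms(1) by (intro mult_left_mono) auto
    then show ?thesis by (simp add: divide_le_eq)
  qed
  have int: "f integrable_on {g / 2 ^ Suc m..g}"
    using Suc.prems by (rule integrable_on_subinterval) (use le1 in auto)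
  have "(\<Sum>j\<le>Suc m. integral {g / 2 ^ Suc j..g / 2 ^ j} f)
      = integral {g / 2 ^ Suc m..g} f + integral {g / 2 ^ Suc (Suc m)..g / 2 ^ Suc m} f"
    using Suc.IH[OF int] by simp
  also have "\<dots> = integral {g / 2 ^ Suc (Suc m)..g} f"
    using Henstock_Kurzweil_Integration.integral_combine[OF le1 le2 Suc.prems] by simp
  finally show ?case .
qed



definition Zs :: "real \<Rightarrow> nat \<Rightarrow> (nat \<Rightarrow> bool list \<Rightarrow> real) \<Rightarrow> (nat \<Rightarrow> bool list \<Rightarrow> real) \<Rightarrow> bool list \<Rightarrow> real" where
  "Zs \<delta> n p w y = (\<Sum>t\<in>{1..n}. if \<delta> \<le> tree_at p t y \<and> tree_at p t y \<le> 1 - \<delta>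
      then eta (tree_at p t y) (y ! (t - 1)) * tree_at w t y else 0)"

definition Ts :: "real \<Rightarrow> real \<Rightarrow> nat \<Rightarrow> (nat \<Rightarrow> bool list \<Rightarrow> real) \<Rightarrow> (nat \<Rightarrow> bool list \<Rightarrow> real) \<Rightarrow> bool list \<Rightarrow> real" where
  "Ts \<delta> K n p w y = (\<Sum>t\<in>{1..n}. if \<delta> \<le> tree_at p t y \<and> tree_at p t y \<le> 1 - \<delta>
      then eta (tree_at p t y) (y ! (t - 1)) * tree_at w t y - K * (tree_at w t y)\<^sup>2 else 0)"

lemma level_bound:
  assumes p01: "\<forall>t\<in>{1..n}. \<forall>u::bool list. length u = t - 1 \<longrightarrow> 0 \<le> p t u \<and> p t u \<le> 1"
    and d: "0 < \<delta>" "\<delta> < 1/2"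
    and W: "finite W" "W \<noteq> {}" and b: "b > 0" and Wb: "\<forall>w\<in>W. \<forall>t u. \<bar>w t u\<bar> \<le> b"
  shows "tree_expect n p (\<lambda>y. Max ((\<lambda>w. Zs \<delta> n p w y) ` W))
     \<le> 2 * sqrt ((6 * real n * b\<^sup>2 / \<delta>) * ln (real (card W))) + ln (real (card W)) / (3 * \<delta> / (2 * b))"
proof (rule opt_bound)
  show "0 \<le> ln (real (card W))" using W by (simp add: Suc_leI card_gt_0_iff)
  show "0 \<le> 6 * real n * b\<^sup>2 / \<delta>" using d by simp
  show "0 < 3 * \<delta> / (2 * b)" using d b by simp
  fix l :: real assume l0: "0 < l" and lL: "l \<le> 3 * \<delta> / (2 * b)"
  have lb: "l * b \<le> 3/2 * \<delta>" using lL b by (simp add: field_simps)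
  define \<kappa> where "\<kappa> = 6 * l\<^sup>2 * b\<^sup>2 / \<delta>"
  have k0: "\<kappa> \<ge> 0" unfolding \<kappa>_def using d by simp
  have E: "\<forall>w\<in>W. tree_expect n p (\<lambda>y. exp (l * Zs \<delta> n p w y)) \<le> exp (real n * \<kappa>)"
  proof
    fix w assume w: "w \<in> W"
    define f where "f t u a = l * (if \<delta> \<le> p t u \<and> p t u \<le> 1 - \<delta> then eta (p t u) a * w t u else 0)"
      for t and u :: "bool list" and a
    have eq: "(\<lambda>y. exp (l * Zs \<delta> n p w y)) = (\<lambda>y. exp (\<Sum>t\<in>{1..n}. f t (take (t-1) y) (y!(t-1))))"
      unfolding Zs_def f_def tree_at_def sum_distrib_left by simp
    have "tree_expect n p (\<lambda>y. exp (\<Sum>t\<in>{1..n}. f t (take (t-1) y) (y!(t-1)))) \<le> exp (real n * \<kappa>)"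
    proof (rule exp_supermart[OF p01], intro ballI allI impI)
      fix t u assume "t \<in> {1..n}" "length (u::bool list) = t - 1"
      show "p t u * exp (f t u True) + (1 - p t u) * exp (f t u False) \<le> exp \<kappa>"
      proof (cases "\<delta> \<le> p t u \<and> p t u \<le> 1 - \<delta>")
        case True
        have "\<bar>w t u\<bar> \<le> b" using Wb w by blast
        then show ?thesis unfolding f_def \<kappa>_def using True step_chain[OF d _ _ _ l0 lb] by simp
      next
        case False
        then have "f t u True = 0" "f t u False = 0" unfolding f_def by auto
        then show ?thesis using k0 by simp
      qed
    qed
    then show "tree_expect n p (\<lambda>y. exp (l * Zs \<delta> n p w y)) \<le> exp (real n * \<kappa>)" using eq by simp
  qed
  have "tree_expect n p (\<lambda>y. Max ((\<lambda>w. Zs \<delta> n p w y) ` W)) \<le> (ln (real (card W)) + real n * \<kappa>) / l"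
    by (rule finite_max_bound[OF p01 W l0 E])
  also have "\<dots> = ln (real (card W)) / l + l * (6 * real n * b\<^sup>2 / \<delta>)"
    unfolding \<kappa>_def using l0 by (simp add: field_simps power2_eq_square)
  finally show "tree_expect n p (\<lambda>y. Max ((\<lambda>w. Zs \<delta> n p w y) ` W)) \<le> ln (real (card W)) / l + l * (6 * real n * b\<^sup>2 / \<delta>)" .
qed

lemma top_bound:
  assumes p01: "\<forall>t\<in>{1..n}. \<forall>u::bool list. length u = t - 1 \<longrightarrow> 0 \<le> p t u \<and> p t u \<le> 1"
    and d: "0 < \<delta>" "\<delta> < 1/2" and K: "K > 0"
    and W: "finite W" "W \<noteq> {}" and Wb: "\<forall>w\<in>W. \<forall>t u. \<bar>w t u\<bar> \<le> 1"
  shows "tree_expect n p (\<lambda>y. Max ((\<lambda>w. Ts \<delta> K n p w y) ` W))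
     \<le> ln (real (card W)) / (\<delta> * ln (1 + K / 8))"
proof -
  define l where "l = \<delta> * ln (1 + K / 8)"
  have l0: "l > 0" unfolding l_def using d K by simp
  have E: "\<forall>w\<in>W. tree_expect n p (\<lambda>y. exp (l * Ts \<delta> K n p w y)) \<le> exp 0"
  proof
    fix w assume w: "w \<in> W"
    define f where "f t u a = l * (if \<delta> \<le> p t u \<and> p t u \<le> 1 - \<delta> then eta (p t u) a * w t u - K * (w t u)\<^sup>2 else 0)"
      for t and u :: "bool list" and a
    have eq: "(\<lambda>y. exp (l * Ts \<delta> K n p w y)) = (\<lambda>y. exp (\<Sum>t\<in>{1..n}. f t (take (t-1) y) (y!(t-1))))"
      unfolding Ts_def f_def tree_at_def sum_distrib_left by simp
    have "tree_expect n p (\<lambda>y. exp (\<Sum>t\<in>{1..n}. f t (take (t-1) y) (y!(t-1)))) \<le> exp (real n * 0)"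
    proof (rule exp_supermart[OF p01], intro ballI allI impI)
      fix t u assume "t \<in> {1..n}" "length (u::bool list) = t - 1"
      show "p t u * exp (f t u True) + (1 - p t u) * exp (f t u False) \<le> exp 0"
      proof (cases "\<delta> \<le> p t u \<and> p t u \<le> 1 - \<delta>")
        case True
        have "\<bar>w t u\<bar> \<le> 1" using Wb w by blast
        then show ?thesis unfolding f_def l_def using True step_top[OF d _ _ _ K] by simp
      next
        case False
        then have "f t u True = 0" "f t u False = 0" unfolding f_def by auto
        then show ?thesis by simp
      qed
    qed
    then show "tree_expect n p (\<lambda>y. exp (l * Ts \<delta> K n p w y)) \<le> exp 0" using eq by simp
  qed
  have "tree_expect n p (\<lambda>y. Max ((\<lambda>w. Ts \<delta> K n p w y) ` W)) \<le> (ln (real (card W)) + 0) / l"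
    by (rule finite_max_bound[OF p01 W l0 E])
  then show ?thesis unfolding l_def by simp
qed



definition clip :: "real \<Rightarrow> real \<Rightarrow> real" where "clip b x = max (-b) (min b x)"
definition shr :: "real \<Rightarrow> real \<Rightarrow> real" where
  "shr c x = (if x > c then x - c else if x < -c then x + c else 0)"

lemma clip_id: "\<bar>x\<bar> \<le> b \<Longrightarrow> clip b x = x" unfolding clip_def by auto
lemma clip_bound: "0 \<le> b \<Longrightarrow> \<bar>clip b x\<bar> \<le> b" unfolding clip_def by auto

lemma shr_props:
  assumes "\<bar>a\<bar> \<le> 1" "\<bar>v - a\<bar> \<le> c" "c > 0"
  shows "\<bar>shr c v\<bar> \<le> \<bar>a\<bar>" "\<bar>v - shr c v\<bar> \<le> c" "\<bar>shr c v - a\<bar> \<le> 2 * c"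
  using assms unfolding shr_def by auto

lemma eta_abs:
  assumes "0 < \<delta>" "\<delta> \<le> P" "P \<le> 1 - \<delta>"
  shows "\<bar>eta P B\<bar> \<le> 1 / \<delta>"
proof -
  have "1 / P \<le> 1 / \<delta>" "1 / (1 - P) \<le> 1 / \<delta>" using assms by (auto intro: divide_left_mono)
  then show ?thesis using assms unfolding eta_def by (auto simp: abs_if divide_inverse)
qed

lemma eta_mult_bound:
  assumes "0 < \<delta>" "\<delta> \<le> P" "P \<le> 1 - \<delta>" "\<bar>r\<bar> \<le> c"
  shows "eta P B * r \<le> c / \<delta>"
proof -
  have "eta P B * r \<le> \<bar>eta P B\<bar> * \<bar>r\<bar>" by (simp add: abs_mult[symmetric])
  also have "\<dots> \<le> (1 / \<delta>) * c" using eta_abs[OF assms(1-3)] assms(4) assms(1) by (intro mult_mono) auto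
  finally show ?thesis by simp
qed

lemma per_t_full:
  fixes P a c gm K \<delta> :: real and x :: "nat \<Rightarrow> real" and bj :: "nat \<Rightarrow> real"
  assumes d: "0 < \<delta>" and s: "\<delta> \<le> P" "P \<le> 1 - \<delta>" and a: "\<bar>a\<bar> \<le> 1" and c: "c > 0"
    and x0: "\<bar>x 0 - a\<bar> \<le> c" and xm: "\<bar>x m - a\<bar> \<le> gm" and K: "K \<ge> 0"
    and xj: "\<forall>j<m. \<bar>x (Suc j) - x j\<bar> \<le> bj j"
  shows "eta P B * a - K * a\<^sup>2 \<le>
      (eta P B * clip 1 (shr c (x 0)) - K * (clip 1 (shr c (x 0)))\<^sup>2)
      + eta P B * clip c (x 0 - clip 1 (shr c (x 0)))
      + (\<Sum>j<m. eta P B * clip (bj j) (x (Suc j) - x j)) + gm / \<delta>"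
proof -
  define e where "e = eta P B"
  define s0 where "s0 = shr c (x 0)"
  have sp: "\<bar>s0\<bar> \<le> \<bar>a\<bar>" "\<bar>x 0 - s0\<bar> \<le> c" using shr_props[OF a x0 c] by (auto simp: s0_def)
  have c1: "clip 1 s0 = s0" using sp a by (intro clip_id) auto
  have c2: "clip c (x 0 - s0) = x 0 - s0" using sp by (intro clip_id) auto
  have c3: "(\<Sum>j<m. e * clip (bj j) (x (Suc j) - x j)) = e * (x m - x 0)"
  proof -
    have "(\<Sum>j<m. e * clip (bj j) (x (Suc j) - x j)) = (\<Sum>j<m. e * (x (Suc j) - x j))"
      by (rule sum.cong) (use xj clip_id in auto)
    also have "\<dots> = e * (x m - x 0)" by (simp add: sum_distrib_left[symmetric] sum_lessThan_telescope)
    finally show ?thesis .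
  qed
  have sq: "s0\<^sup>2 \<le> a\<^sup>2" using sp(1) by (simp add: abs_le_square_iff)
  have res: "e * (a - x m) \<le> gm / \<delta>"
    unfolding e_def by (rule eta_mult_bound[OF d s]) (use xm in \<open>simp add: abs_minus_commute\<close>)
  have "K * s0\<^sup>2 \<le> K * a\<^sup>2" by (intro mult_left_mono) (use sq K in auto)
  then show ?thesis unfolding e_def[symmetric] s0_def[symmetric] c1 c2 c3 using res
    by (simp add: algebra_simps)
qed

lemma per_t_short:
  fixes P a c K \<delta> :: real and x0 :: real
  assumes d: "0 < \<delta>" and s: "\<delta> \<le> P" "P \<le> 1 - \<delta>" and a: "\<bar>a\<bar> \<le> 1" and c: "c > 0"
    and x0: "\<bar>x0 - a\<bar> \<le> c" and K: "K \<ge> 0"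
  shows "eta P B * a - K * a\<^sup>2 \<le>
      (eta P B * clip 1 (shr c x0) - K * (clip 1 (shr c x0))\<^sup>2) + 2 * c / \<delta>"
proof -
  define e where "e = eta P B"
  define s0 where "s0 = shr c x0"
  have sp: "\<bar>s0\<bar> \<le> \<bar>a\<bar>" "\<bar>s0 - a\<bar> \<le> 2 * c" using shr_props[OF a x0 c] by (auto simp: s0_def)
  have c1: "clip 1 s0 = s0" using sp a by (intro clip_id) auto
  have sq: "s0\<^sup>2 \<le> a\<^sup>2" using sp(1) by (simp add: abs_le_square_iff)
  have res: "e * (a - s0) \<le> (2 * c) / \<delta>"
    unfolding e_def by (rule eta_mult_bound[OF d s]) (use sp in \<open>simp add: abs_minus_commute\<close>)
  have "K * s0\<^sup>2 \<le> K * a\<^sup>2" by (intro mult_left_mono) (use sq K in auto)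
  then show ?thesis unfolding e_def[symmetric] s0_def[symmetric] c1 using res
    by (simp add: algebra_simps)
qed

lemma sqrt_helper:
  fixes n \<delta> b Y L k d :: real
  assumes "0 < \<delta>" "0 \<le> n" "0 \<le> b" "0 \<le> Y" "Y \<le> k * L" "3 * k \<le> d\<^sup>2" "0 \<le> d" "0 \<le> L"
  shows "sqrt (6 * n * b\<^sup>2 / \<delta> * Y) \<le> d * b * sqrt (2 * n / \<delta>) * sqrt L"
proof (rule real_le_lsqrt)
  show "0 \<le> d * b * sqrt (2 * n / \<delta>) * sqrt L" using assms by simp
  have "6 * n * b\<^sup>2 / \<delta> * Y \<le> 6 * n * b\<^sup>2 / \<delta> * (k * L)"
    using assms by (intro mult_left_mono) auto
  also have "\<dots> = (3 * k) * (b\<^sup>2 * (2 * n / \<delta>) * L)" by (simp add: field_simps)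
  also have "\<dots> \<le> d\<^sup>2 * (b\<^sup>2 * (2 * n / \<delta>) * L)" using assms by (intro mult_right_mono) auto
  also have "\<dots> = (d * b * sqrt (2 * n / \<delta>) * sqrt L)\<^sup>2"
    using assms by (simp add: power_mult_distrib)
  finally show "6 * n * b\<^sup>2 / \<delta> * Y \<le> (d * b * sqrt (2 * n / \<delta>) * sqrt L)\<^sup>2" .
qed



lemma ln_card_image_le:
  assumes "finite A" "A \<noteq> {}"
  shows "ln (real (card (f ` A))) \<le> ln (real (card A))" "0 \<le> ln (real (card (f ` A)))"
    "finite (f ` A)" "f ` A \<noteq> {}"
proof -
  have "card (f ` A) \<ge> 1" using assms by (simp add: Suc_leI card_gt_0_iff)
  moreover have "card (f ` A) \<le> card A" by (rule card_image_le[OF assms(1)])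
  ultimately show "ln (real (card (f ` A))) \<le> ln (real (card A))" "0 \<le> ln (real (card (f ` A)))"
    by auto
  show "finite (f ` A)" "f ` A \<noteq> {}" using assms by auto
qed

lemma top_exp_bound:
  assumes p01: "\<forall>t\<in>{1..n}. \<forall>u::bool list. length u = t - 1 \<longrightarrow> 0 \<le> p t u \<and> p t u \<le> 1"
    and d: "0 < \<delta>" "\<delta> < 1/2" and K: "K > 0" and c: "c > 0"
    and C: "finite C" "C \<noteq> {}"
  shows "tree_expect n p (\<lambda>y. Max ((\<lambda>w. Ts \<delta> K n p w y) ` ((\<lambda>v t u. clip 1 (shr c (v t u))) ` C)))
      \<le> (1 / \<delta>) * (ln (real (card C)) / ln (1 + K / 8))"
proof -
  let ?W = "(\<lambda>v t u. clip 1 (shr c (v t u))) ` C"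
  note ci = ln_card_image_le[OF C, of "\<lambda>v t u. clip 1 (shr c (v t u))"]
  have Wb: "\<forall>w\<in>?W. \<forall>t u. \<bar>w t u\<bar> \<le> 1" using clip_bound by auto
  have "tree_expect n p (\<lambda>y. Max ((\<lambda>w. Ts \<delta> K n p w y) ` ?W)) \<le> ln (real (card ?W)) / (\<delta> * ln (1 + K / 8))"
    by (rule top_bound[OF p01 d K ci(3,4) Wb])
  also have "\<dots> \<le> ln (real (card C)) / (\<delta> * ln (1 + K / 8))"
    using ci(1) d K by (intro divide_right_mono) auto
  finally show ?thesis by simp
qed

lemma level0_exp_bound:
  assumes p01: "\<forall>t\<in>{1..n}. \<forall>u::bool list. length u = t - 1 \<longrightarrow> 0 \<le> p t u \<and> p t u \<le> 1"
    and d: "0 < \<delta>" "\<delta> < 1/2" and c: "c > 0"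
    and C: "finite C" "C \<noteq> {}"
  shows "tree_expect n p (\<lambda>y. Max ((\<lambda>w. Zs \<delta> n p w y) ` ((\<lambda>v t u. clip c (v t u - clip 1 (shr c (v t u)))) ` C)))
      \<le> (c / 2) * (30 * sqrt (2 * real n / \<delta>) * sqrt (ln (real (card C))) + (8 / \<delta>) * ln (real (card C)))"
proof -
  let ?W = "(\<lambda>v t u. clip c (v t u - clip 1 (shr c (v t u)))) ` C"
  let ?L = "ln (real (card C))"
  let ?Y = "ln (real (card ?W))"
  note ci = ln_card_image_le[OF C, of "\<lambda>v t u. clip c (v t u - clip 1 (shr c (v t u)))"]
  have L0: "0 \<le> ?L" using ci by linarith
  have Wb: "\<forall>w\<in>?W. \<forall>t u. \<bar>w t u\<bar> \<le> c" using clip_bound c by auto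
  have "tree_expect n p (\<lambda>y. Max ((\<lambda>w. Zs \<delta> n p w y) ` ?W))
     \<le> 2 * sqrt ((6 * real n * c\<^sup>2 / \<delta>) * ?Y) + ?Y / (3 * \<delta> / (2 * c))"
    by (rule level_bound[OF p01 d ci(3,4) c Wb])
  also have "sqrt ((6 * real n * c\<^sup>2 / \<delta>) * ?Y) \<le> 2 * c * sqrt (2 * real n / \<delta>) * sqrt ?L"
    by (rule sqrt_helper[where k = 1 and d = 2]) (use d c ci L0 in auto)
  also have "?Y / (3 * \<delta> / (2 * c)) = ?Y * (2 * c / (3 * \<delta>))" by simp
  also have "\<dots> \<le> ?L * (2 * c / (3 * \<delta>))" using ci(1) d c by (intro mult_right_mono) auto
  also have "2 * (2 * c * sqrt (2 * real n / \<delta>) * sqrt ?L) + ?L * (2 * c / (3 * \<delta>))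
      \<le> (c / 2) * (30 * sqrt (2 * real n / \<delta>) * sqrt ?L + (8 / \<delta>) * ?L)"
  proof -
    have a: "0 \<le> c * sqrt (2 * real n / \<delta>) * sqrt ?L" using c d L0 by simp
    have b: "0 \<le> c * ?L / \<delta>" using c d L0 by simp
    have "2 * (2 * c * sqrt (2 * real n / \<delta>) * sqrt ?L) = 4 * (c * sqrt (2 * real n / \<delta>) * sqrt ?L)" by simp
    moreover have "?L * (2 * c / (3 * \<delta>)) = (2/3) * (c * ?L / \<delta>)" by simp
    moreover have "(c / 2) * (30 * sqrt (2 * real n / \<delta>) * sqrt ?L + (8 / \<delta>) * ?L)
        = 15 * (c * sqrt (2 * real n / \<delta>) * sqrt ?L) + 4 * (c * ?L / \<delta>)" by (simp add: algebra_simps)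
    ultimately show ?thesis using a b by linarith
  qed
  finally show ?thesis by simp
qed

lemma levelj_exp_bound:
  assumes p01: "\<forall>t\<in>{1..n}. \<forall>u::bool list. length u = t - 1 \<longrightarrow> 0 \<le> p t u \<and> p t u \<le> 1"
    and d: "0 < \<delta>" "\<delta> < 1/2" and c: "c > 0"
    and C1: "finite C1" "C1 \<noteq> {}" and C0: "finite C0" "C0 \<noteq> {}" and cc: "card C0 \<le> card C1"
  shows "tree_expect n p (\<lambda>y. Max ((\<lambda>w. Zs \<delta> n p w y) ` ((\<lambda>(v, v') t u. clip (3 * c) (v t u - v' t u)) ` (C1 \<times> C0))))
      \<le> (c / 2) * (30 * sqrt (2 * real n / \<delta>) * sqrt (ln (real (card C1))) + (8 / \<delta>) * ln (real (card C1)))"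
proof -
  let ?W = "(\<lambda>(v, v') t u. clip (3 * c) (v t u - v' t u)) ` (C1 \<times> C0)"
  let ?L = "ln (real (card C1))"
  let ?Y = "ln (real (card ?W))"
  have CC: "finite (C1 \<times> C0)" "C1 \<times> C0 \<noteq> {}" using C1 C0 by auto
  note ci = ln_card_image_le[OF CC, of "\<lambda>(v, v') t u. clip (3 * c) (v t u - v' t u)"]
  have c1: "card C1 \<ge> 1" "card C0 \<ge> 1" using C1 C0 by (simp_all add: Suc_leI card_gt_0_iff)
  have L0: "0 \<le> ?L" using c1 by simp
  have "ln (real (card (C1 \<times> C0))) = ln (real (card C1) * real (card C0))"
    by (simp add: card_cartesian_product)
  also have "\<dots> = ?L + ln (real (card C0))" using c1 by (simp add: ln_mult)
  also have "\<dots> \<le> 2 * ?L" using cc c1 by simp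
  finally have YL: "?Y \<le> 2 * ?L" using ci(1) by linarith
  have c3: "3 * c > 0" using c by simp
  have Wb: "\<forall>w\<in>?W. \<forall>t u. \<bar>w t u\<bar> \<le> 3 * c" using clip_bound c by auto
  have "tree_expect n p (\<lambda>y. Max ((\<lambda>w. Zs \<delta> n p w y) ` ?W))
     \<le> 2 * sqrt ((6 * real n * (3 * c)\<^sup>2 / \<delta>) * ?Y) + ?Y / (3 * \<delta> / (2 * (3 * c)))"
    by (rule level_bound[OF p01 d ci(3,4) c3 Wb])
  also have "sqrt ((6 * real n * (3 * c)\<^sup>2 / \<delta>) * ?Y) \<le> (5/2) * (3 * c) * sqrt (2 * real n / \<delta>) * sqrt ?L"
    by (rule sqrt_helper[where k = 2]) (use d c ci L0 YL in \<open>auto simp: power2_eq_square\<close>)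
  also have "?Y / (3 * \<delta> / (2 * (3 * c))) = ?Y * (2 * c / \<delta>)" by simp
  also have "\<dots> \<le> (2 * ?L) * (2 * c / \<delta>)" using YL d c by (intro mult_right_mono) auto
  also have "2 * ((5/2) * (3 * c) * sqrt (2 * real n / \<delta>) * sqrt ?L) + (2 * ?L) * (2 * c / \<delta>)
      = (c / 2) * (30 * sqrt (2 * real n / \<delta>) * sqrt ?L + (8 / \<delta>) * ?L)"
    by (simp add: algebra_simps)
  finally show ?thesis by simp
qed



lemma pointwise_full:
  fixes g :: "'z \<Rightarrow> real" and z :: "nat \<Rightarrow> bool list \<Rightarrow> 'z" and V :: "nat \<Rightarrow> nat \<Rightarrow> bool list \<Rightarrow> real"
  assumes d: "0 < \<delta>" and K: "K \<ge> 0" and c: "c > 0" and gb: "\<forall>x. \<bar>g x\<bar> \<le> 1"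
    and cov: "\<forall>j\<le>m. \<forall>t\<in>{1..n}. \<bar>tree_at (V j) t y - g (tree_at z t y)\<bar> \<le> gj j"
    and gj0: "gj 0 = c" and gjs: "\<forall>j. gj j = 2 * gj (Suc j)" and gm0: "gj m \<ge> 0"
  shows "(\<Sum>t\<in>{t\<in>{1..n}. \<delta> \<le> tree_at p t y \<and> tree_at p t y \<le> 1 - \<delta>}.
            eta (tree_at p t y) (y ! (t - 1)) * g (tree_at z t y) - K * (g (tree_at z t y))\<^sup>2)
    \<le> Ts \<delta> K n p (\<lambda>t u. clip 1 (shr c (V 0 t u))) y
      + Zs \<delta> n p (\<lambda>t u. clip c (V 0 t u - clip 1 (shr c (V 0 t u)))) y
      + (\<Sum>j<m. Zs \<delta> n p (\<lambda>t u. clip (3 * gj (Suc j)) (V (Suc j) t u - V j t u)) y)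
      + real n * (gj m / \<delta>)"
proof -
  define cnd where "cnd t = (\<delta> \<le> tree_at p t y \<and> tree_at p t y \<le> 1 - \<delta>)" for t
  define e where "e t = eta (tree_at p t y) (y ! (t - 1))" for t
  define a where "a t = g (tree_at z t y)" for t
  define x where "x j t = tree_at (V j) t y" for j t
  have lhs: "(\<Sum>t\<in>{t\<in>{1..n}. \<delta> \<le> tree_at p t y \<and> tree_at p t y \<le> 1 - \<delta>}.
            eta (tree_at p t y) (y ! (t - 1)) * g (tree_at z t y) - K * (g (tree_at z t y))\<^sup>2)
      = (\<Sum>t\<in>{1..n}. if cnd t then e t * a t - K * (a t)\<^sup>2 else 0)"
    unfolding cnd_def e_def a_def by (rule sum.inter_filter) simp
  have pt: "(if cnd t then e t * a t - K * (a t)\<^sup>2 else 0)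
      \<le> (if cnd t then e t * clip 1 (shr c (x 0 t)) - K * (clip 1 (shr c (x 0 t)))\<^sup>2 else 0)
       + (if cnd t then e t * clip c (x 0 t - clip 1 (shr c (x 0 t))) else 0)
       + (\<Sum>j<m. if cnd t then e t * clip (3 * gj (Suc j)) (x (Suc j) t - x j t) else 0)
       + (if cnd t then gj m / \<delta> else 0)" if t: "t \<in> {1..n}" for t
  proof (cases "cnd t")
    case True
    have xj: "\<forall>j<m. \<bar>x (Suc j) t - x j t\<bar> \<le> 3 * gj (Suc j)"
    proof (intro allI impI)
      fix j assume "j < m"
      then have "\<bar>x (Suc j) t - a t\<bar> \<le> gj (Suc j)" "\<bar>x j t - a t\<bar> \<le> gj j"
        using cov t unfolding x_def a_def by auto
      then show "\<bar>x (Suc j) t - x j t\<bar> \<le> 3 * gj (Suc j)" using gjs[rule_format, of j] by linarith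
    qed
    have x0: "\<bar>x 0 t - a t\<bar> \<le> c" using cov t gj0 unfolding x_def a_def by auto
    have xm: "\<bar>x m t - a t\<bar> \<le> gj m" using cov t unfolding x_def a_def by auto
    have s: "\<delta> \<le> tree_at p t y" "tree_at p t y \<le> 1 - \<delta>" using True unfolding cnd_def by auto
    have "e t * a t - K * (a t)\<^sup>2 \<le>
      (e t * clip 1 (shr c (x 0 t)) - K * (clip 1 (shr c (x 0 t)))\<^sup>2)
      + e t * clip c (x 0 t - clip 1 (shr c (x 0 t)))
      + (\<Sum>j<m. e t * clip (3 * gj (Suc j)) ((\<lambda>j. x j t) (Suc j) - (\<lambda>j. x j t) j)) + gj m / \<delta>"
      unfolding e_def
      by (rule per_t_full[OF d s _ c, where x = "\<lambda>j. x j t" and bj = "\<lambda>j. 3 * gj (Suc j)"])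
         (use gb x0 xm K xj in \<open>auto simp: a_def\<close>)
    then show ?thesis using True by simp
  next
    case False
    then show ?thesis by simp
  qed
  have "(\<Sum>t\<in>{1..n}. if cnd t then e t * a t - K * (a t)\<^sup>2 else 0)
     \<le> (\<Sum>t\<in>{1..n}. (if cnd t then e t * clip 1 (shr c (x 0 t)) - K * (clip 1 (shr c (x 0 t)))\<^sup>2 else 0)
       + (if cnd t then e t * clip c (x 0 t - clip 1 (shr c (x 0 t))) else 0)
       + (\<Sum>j<m. if cnd t then e t * clip (3 * gj (Suc j)) (x (Suc j) t - x j t) else 0)
       + (if cnd t then gj m / \<delta> else 0))"
    by (rule sum_mono) (rule pt)
  also have "\<dots> = (\<Sum>t\<in>{1..n}. if cnd t then e t * clip 1 (shr c (x 0 t)) - K * (clip 1 (shr c (x 0 t)))\<^sup>2 else 0)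
       + (\<Sum>t\<in>{1..n}. if cnd t then e t * clip c (x 0 t - clip 1 (shr c (x 0 t))) else 0)
       + (\<Sum>j<m. \<Sum>t\<in>{1..n}. if cnd t then e t * clip (3 * gj (Suc j)) (x (Suc j) t - x j t) else 0)
       + (\<Sum>t\<in>{1..n}. if cnd t then gj m / \<delta> else 0)"
    unfolding sum.distrib by (simp only: sum.swap[of _ "{1..n}"])
  also have "(\<Sum>t\<in>{1..n}. if cnd t then gj m / \<delta> else 0) \<le> (\<Sum>t\<in>{1..n}. gj m / \<delta>)"
    by (rule sum_mono) (use gm0 d in auto)
  also have "(\<Sum>t\<in>{1..n}. gj m / \<delta>) = real n * (gj m / \<delta>)" by simp
  also have "(\<Sum>t\<in>{1..n}. if cnd t then e t * clip 1 (shr c (x 0 t)) - K * (clip 1 (shr c (x 0 t)))\<^sup>2 else 0)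
      = Ts \<delta> K n p (\<lambda>t u. clip 1 (shr c (V 0 t u))) y"
    unfolding Ts_def by (rule sum.cong) (simp_all add: tree_at_def cnd_def e_def x_def)
  also have "(\<Sum>t\<in>{1..n}. if cnd t then e t * clip c (x 0 t - clip 1 (shr c (x 0 t))) else 0)
      = Zs \<delta> n p (\<lambda>t u. clip c (V 0 t u - clip 1 (shr c (V 0 t u)))) y"
    unfolding Zs_def by (rule sum.cong) (simp_all add: tree_at_def cnd_def e_def x_def)
  also have "(\<Sum>j<m. \<Sum>t\<in>{1..n}. if cnd t then e t * clip (3 * gj (Suc j)) (x (Suc j) t - x j t) else 0)
      = (\<Sum>j<m. Zs \<delta> n p (\<lambda>t u. clip (3 * gj (Suc j)) (V (Suc j) t u - V j t u)) y)"
    unfolding Zs_def by (intro sum.cong refl) (simp_all add: tree_at_def cnd_def e_def x_def)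
  finally show ?thesis unfolding lhs by simp
qed

lemma pointwise_short:
  fixes g :: "'z \<Rightarrow> real" and z :: "nat \<Rightarrow> bool list \<Rightarrow> 'z" and v :: "nat \<Rightarrow> bool list \<Rightarrow> real"
  assumes d: "0 < \<delta>" and K: "K \<ge> 0" and c: "c > 0" and gb: "\<forall>x. \<bar>g x\<bar> \<le> 1"
    and cov: "\<forall>t\<in>{1..n}. \<bar>tree_at v t y - g (tree_at z t y)\<bar> \<le> c"
  shows "(\<Sum>t\<in>{t\<in>{1..n}. \<delta> \<le> tree_at p t y \<and> tree_at p t y \<le> 1 - \<delta>}.
            eta (tree_at p t y) (y ! (t - 1)) * g (tree_at z t y) - K * (g (tree_at z t y))\<^sup>2)
    \<le> Ts \<delta> K n p (\<lambda>t u. clip 1 (shr c (v t u))) y + real n * (2 * c / \<delta>)"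
proof -
  define cnd where "cnd t = (\<delta> \<le> tree_at p t y \<and> tree_at p t y \<le> 1 - \<delta>)" for t
  define e where "e t = eta (tree_at p t y) (y ! (t - 1))" for t
  define a where "a t = g (tree_at z t y)" for t
  define x where "x t = tree_at v t y" for t
  have lhs: "(\<Sum>t\<in>{t\<in>{1..n}. \<delta> \<le> tree_at p t y \<and> tree_at p t y \<le> 1 - \<delta>}.
            eta (tree_at p t y) (y ! (t - 1)) * g (tree_at z t y) - K * (g (tree_at z t y))\<^sup>2)
      = (\<Sum>t\<in>{1..n}. if cnd t then e t * a t - K * (a t)\<^sup>2 else 0)"
    unfolding cnd_def e_def a_def by (rule sum.inter_filter) simp
  have pt: "(if cnd t then e t * a t - K * (a t)\<^sup>2 else 0)
      \<le> (if cnd t then e t * clip 1 (shr c (x t)) - K * (clip 1 (shr c (x t)))\<^sup>2 else 0)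
       + (if cnd t then 2 * c / \<delta> else 0)" if t: "t \<in> {1..n}" for t
  proof (cases "cnd t")
    case True
    have s: "\<delta> \<le> tree_at p t y" "tree_at p t y \<le> 1 - \<delta>" using True unfolding cnd_def by auto
    have "e t * a t - K * (a t)\<^sup>2 \<le> (e t * clip 1 (shr c (x t)) - K * (clip 1 (shr c (x t)))\<^sup>2) + 2 * c / \<delta>"
      unfolding e_def by (rule per_t_short[OF d s _ c _ K]) (use gb cov t in \<open>auto simp: a_def x_def\<close>)
    then show ?thesis using True by simp
  next
    case False
    then show ?thesis by simp
  qed
  have "(\<Sum>t\<in>{1..n}. if cnd t then e t * a t - K * (a t)\<^sup>2 else 0)
     \<le> (\<Sum>t\<in>{1..n}. (if cnd t then e t * clip 1 (shr c (x t)) - K * (clip 1 (shr c (x t)))\<^sup>2 else 0)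
       + (if cnd t then 2 * c / \<delta> else 0))"
    by (rule sum_mono) (rule pt)
  also have "\<dots> = (\<Sum>t\<in>{1..n}. if cnd t then e t * clip 1 (shr c (x t)) - K * (clip 1 (shr c (x t)))\<^sup>2 else 0)
       + (\<Sum>t\<in>{1..n}. if cnd t then 2 * c / \<delta> else 0)"
    by (simp add: sum.distrib)
  also have "(\<Sum>t\<in>{1..n}. if cnd t then 2 * c / \<delta> else 0) \<le> (\<Sum>t\<in>{1..n}. 2 * c / \<delta>)"
    by (rule sum_mono) (use c d in auto)
  also have "(\<Sum>t\<in>{1..n}. 2 * c / \<delta>) = real n * (2 * c / \<delta>)" by simp
  also have "(\<Sum>t\<in>{1..n}. if cnd t then e t * clip 1 (shr c (x t)) - K * (clip 1 (shr c (x t)))\<^sup>2 else 0)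
      = Ts \<delta> K n p (\<lambda>t u. clip 1 (shr c (v t u))) y"
    unfolding Ts_def by (rule sum.cong) (simp_all add: tree_at_def cnd_def e_def x_def)
  finally show ?thesis unfolding lhs by simp
qed



theorem theorem2:
  fixes \<delta> K \<gamma> :: real and n :: nat
    and G :: "('z \<Rightarrow> real) set"
    and p :: "nat \<Rightarrow> bool list \<Rightarrow> real"
    and z :: "nat \<Rightarrow> bool list \<Rightarrow> 'z"
  assumes "0 < \<delta>" and "\<delta> < 1/2"
    and "G \<noteq> {}"
    and "\<forall>g\<in>G. \<forall>x. \<bar>g x\<bar> \<le> 1"
    and "\<forall>t\<in>{1..n}. \<forall>u::bool list. length u = t - 1 \<longrightarrow> 0 \<le> p t u \<and> p t u \<le> 1"
    and "K > 0" and "\<gamma> > 0"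
  shows "tree_expect n p (\<lambda>y. SUP g\<in>G.
            (\<Sum>t\<in>{t\<in>{1..n}. \<delta> \<le> tree_at p t y \<and> tree_at p t y \<le> 1 - \<delta>}.
               eta (tree_at p t y) (y ! (t - 1)) * g (tree_at z t y) - K * (g (tree_at z t y))\<^sup>2))
    \<le> (1 / \<delta>) * (ln (real (seq_cov_num n G \<gamma> z)) / ln (1 + K / 8))
      + (INF \<alpha>\<in>{0<..\<gamma>}.
           4 * real n * \<alpha> / \<delta>
           + 30 * sqrt (2 * real n / \<delta>) *
               integral {\<alpha>..\<gamma>} (\<lambda>\<rho>. sqrt (ln (real (seq_cov_num n G \<rho> z))))
           + (8 / \<delta>) * integral {\<alpha>..\<gamma>} (\<lambda>\<rho>. ln (real (seq_cov_num n G \<rho> z))))"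
proof -
  note d = assms(1,2) and G0 = assms(3) and Gb = assms(4) and p01 = assms(5) and K0 = assms(6) and g0 = assms(7)
  define Nn where "Nn r = seq_cov_num n G r z" for r
  define gj where "gj j = \<gamma> / 2 ^ j" for j :: nat
  have gjpos: "gj j > 0" for j unfolding gj_def using g0 by simp
  have gjs: "gj j = 2 * gj (Suc j)" for j unfolding gj_def by simp
  have gj0: "gj 0 = \<gamma>" unfolding gj_def by simp
  have gjsA: "\<forall>j. gj j = 2 * gj (Suc j)" using gjs by blast
  have gjle: "gj j \<le> \<gamma>" for j
  proof -
    have "(1::real) \<le> 2 ^ j" by (rule one_le_power) simp
    then have "\<gamma> * 1 \<le> \<gamma> * 2 ^ j" using g0 by (intro mult_left_mono) auto
    then show ?thesis unfolding gj_def by (simp add: divide_le_eq)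
  qed
  have Nge1: "Nn r \<ge> 1" if "r > 0" for r using N_props(2)[OF Gb G0 that] unfolding Nn_def .
  have Nmono: "Nn r' \<le> Nn r" if "0 < r" "r \<le> r'" for r r'
    using N_mono[OF Gb G0 that] unfolding Nn_def .
  have "\<forall>j. \<exists>V. finite V \<and> card V = Nn (gj j) \<and> seq_cover n V G (gj j) z"
    using N_props(1)[OF Gb G0 gjpos] unfolding Nn_def by blast
  then obtain C where C: "\<And>j. finite (C j) \<and> card (C j) = Nn (gj j) \<and> seq_cover n (C j) G (gj j) z"
    by metis
  have Cfin: "finite (C j)" for j using C by blast
  have Ccard: "card (C j) = Nn (gj j)" for j using C by blast
  have Ccov: "seq_cover n (C j) G (gj j) z" for j using C by blast
  have Cne: "C j \<noteq> {}" for j using Nge1[OF gjpos[of j]] Ccard[of j] by auto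
  define Lf where "Lf r = ln (real (Nn r))" for r
  define h where "h r = 30 * sqrt (2 * real n / \<delta>) * sqrt (Lf r) + (8 / \<delta>) * Lf r" for r
  have Lf0: "0 \<le> Lf r" if "r > 0" for r unfolding Lf_def using Nge1[OF that] by simp
  have Lf_anti: "Lf y \<le> Lf x" if "0 < x" "x \<le> y" for x y
    unfolding Lf_def using Nmono[OF that] Nge1[of y] that by simp
  have sLf_anti: "sqrt (Lf y) \<le> sqrt (Lf x)" if "0 < x" "x \<le> y" for x y
    using Lf_anti[OF that] by simp
  have h_anti: "h y \<le> h x" if "0 < x" "x \<le> y" for x y
    unfolding h_def using Lf_anti[OF that] sLf_anti[OF that] d
    by (intro add_mono mult_left_mono) auto
  have h0: "0 \<le> h x" if "0 < x" for x unfolding h_def using Lf0[OF that] d by simp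
  have hint: "h integrable_on {a..b}" if "0 < a" for a b
    by (rule antitone_integrable) (use h_anti that in auto)
  have sLint: "(\<lambda>r. sqrt (Lf r)) integrable_on {a..b}" if "0 < a" for a b
    by (rule antitone_integrable) (use sLf_anti that in auto)
  have Lint: "Lf integrable_on {a..b}" if "0 < a" for a b
    by (rule antitone_integrable) (use Lf_anti that in auto)
  define first where "first = (1 / \<delta>) * (ln (real (Nn \<gamma>)) / ln (1 + K / 8))"
  define Phi where "Phi g y = (\<Sum>t\<in>{t\<in>{1..n}. \<delta> \<le> tree_at p t y \<and> tree_at p t y \<le> 1 - \<delta>}.
               eta (tree_at p t y) (y ! (t - 1)) * g (tree_at z t y) - K * (g (tree_at z t y))\<^sup>2)"
    for g :: "'z \<Rightarrow> real" and y
  define LHS where "LHS = tree_expect n p (\<lambda>y. SUP g\<in>G. Phi g y)"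
  define T0 where "T0 = (\<lambda>v t u. clip 1 (shr \<gamma> (v t u))) ` C 0"
  define MT where "MT y = Max ((\<lambda>w. Ts \<delta> K n p w y) ` T0)" for y
  have T0fin: "finite T0" unfolding T0_def using Cfin by simp
  have ET: "tree_expect n p MT \<le> first"
    using top_exp_bound[OF p01 d K0 g0 Cfin[of 0] Cne[of 0]] unfolding MT_def T0_def first_def
    using Ccard[of 0] gj0 by simp
  have main: "LHS - first \<le> 4 * real n * \<alpha> / \<delta> + 30 * sqrt (2 * real n / \<delta>) *
               integral {\<alpha>..\<gamma>} (\<lambda>\<rho>. sqrt (Lf \<rho>)) + (8 / \<delta>) * integral {\<alpha>..\<gamma>} Lf"
    if a: "\<alpha> \<in> {0<..\<gamma>}" for \<alpha>
  proof -
    have a0: "0 < \<alpha>" "\<alpha> \<le> \<gamma>" using a by auto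
    have ieq: "30 * sqrt (2 * real n / \<delta>) * integral {\<alpha>..\<gamma>} (\<lambda>\<rho>. sqrt (Lf \<rho>)) + (8 / \<delta>) * integral {\<alpha>..\<gamma>} Lf
        = integral {\<alpha>..\<gamma>} h"
    proof -
      have i1: "(\<lambda>r. 30 * sqrt (2 * real n / \<delta>) * sqrt (Lf r)) integrable_on {\<alpha>..\<gamma>}"
        using integrable_on_cmult_left[OF sLint[OF a0(1)], of "30 * sqrt (2 * real n / \<delta>)"] by simp
      have i2: "(\<lambda>r. (8 / \<delta>) * Lf r) integrable_on {\<alpha>..\<gamma>}"
        using integrable_on_cmult_left[OF Lint[OF a0(1)], of "8 / \<delta>"] by simp
      have "integral {\<alpha>..\<gamma>} h = integral {\<alpha>..\<gamma>} (\<lambda>r. 30 * sqrt (2 * real n / \<delta>) * sqrt (Lf r))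
          + integral {\<alpha>..\<gamma>} (\<lambda>r. (8 / \<delta>) * Lf r)"
        unfolding h_def by (rule integral_add[OF i1 i2])
      then show ?thesis by simp
    qed
    have Ih0: "0 \<le> integral {\<alpha>..\<gamma>} h"
      by (rule integral_nonneg[OF hint[OF a0(1)]]) (use h0 a0 in auto)
    show ?thesis
    proof (cases "\<gamma> / 2 < \<alpha>")
      case True
      have pw: "(SUP g\<in>G. Phi g y) \<le> MT y + real n * (2 * \<gamma> / \<delta>)" if y: "length y = n" for y
      proof (rule cSUP_least[OF G0])
        fix g assume g: "g \<in> G"
        obtain v where v: "v \<in> C 0" "\<forall>t\<in>{1..n}. \<bar>tree_at v t y - g (tree_at z t y)\<bar> \<le> gj 0"
          using Ccov[of 0] g y unfolding seq_cover_def by blast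
        have "Phi g y \<le> Ts \<delta> K n p (\<lambda>t u. clip 1 (shr \<gamma> (v t u))) y + real n * (2 * \<gamma> / \<delta>)"
          unfolding Phi_def by (rule pointwise_short[OF d(1) _ g0]) (use K0 Gb g v gj0 in auto)
        also have "Ts \<delta> K n p (\<lambda>t u. clip 1 (shr \<gamma> (v t u))) y \<le> MT y"
          unfolding MT_def T0_def by (rule Max_ge) (use Cfin v in auto)
        finally show "Phi g y \<le> MT y + real n * (2 * \<gamma> / \<delta>)" by simp
      qed
      have "LHS \<le> tree_expect n p (\<lambda>y. MT y + real n * (2 * \<gamma> / \<delta>))"
        unfolding LHS_def by (rule tree_expect_mono[OF p01]) (rule pw)
      also have "\<dots> = tree_expect n p MT + real n * (2 * \<gamma> / \<delta>)"
        by (simp add: tree_expect_add tree_expect_const)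
      also have "real n * (2 * \<gamma> / \<delta>) \<le> 4 * real n * \<alpha> / \<delta>"
      proof -
        have "2 * \<gamma> \<le> 4 * \<alpha>" using True by simp
        then have "real n * (2 * \<gamma>) \<le> real n * (4 * \<alpha>)" by (intro mult_left_mono) auto
        then show ?thesis using d by (simp add: divide_right_mono)
      qed
      finally show ?thesis using ET ieq Ih0 by linarith
    next
      case False
      then have ag: "\<alpha> \<le> gj 1" unfolding gj_def by simp
      obtain k :: nat where "\<gamma> / \<alpha> < real k" using reals_Archimedean2 by blast
      also have "real k < 2 ^ k" by simp
      finally have "gj k < \<alpha>" unfolding gj_def using a0 by (simp add: field_simps)
      define k0 where "k0 = (LEAST k. gj k < \<alpha>)"
      have k0: "gj k0 < \<alpha>" unfolding k0_def by (rule LeastI) fact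
      have k0min: "\<alpha> \<le> gj j" if "j < k0" for j
        using not_less_Least[OF that[unfolded k0_def]] by simp
      have "k0 \<noteq> 0"
      proof
        assume "k0 = 0" then show False using k0 gj0 a0 by simp
      qed
      moreover have "k0 \<noteq> 1" using k0 ag by auto
      ultimately obtain m where m: "k0 = Suc (Suc m)" by (metis One_nat_def not0_implies_Suc)
      have am: "\<alpha> \<le> gj (Suc m)" using k0min m by simp
      have am2: "gj (Suc (Suc m)) < \<alpha>" using k0 m by simp
      define W0 where "W0 = (\<lambda>v t u. clip \<gamma> (v t u - clip 1 (shr \<gamma> (v t u)))) ` C 0"
      define Wl where "Wl j = (\<lambda>(v, v') t u. clip (3 * gj (Suc j)) (v t u - v' t u)) ` (C (Suc j) \<times> C j)" for j
      define M0 where "M0 y = Max ((\<lambda>w. Zs \<delta> n p w y) ` W0)" for y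
      define Ml where "Ml j y = Max ((\<lambda>w. Zs \<delta> n p w y) ` Wl j)" for j y
      have W0fin: "finite W0" unfolding W0_def using Cfin by simp
      have Wlfin: "finite (Wl j)" for j unfolding Wl_def using Cfin by simp
      have pw: "(SUP g\<in>G. Phi g y) \<le> MT y + M0 y + (\<Sum>j<m. Ml j y) + real n * (gj m / \<delta>)"
        if y: "length y = n" for y
      proof (rule cSUP_least[OF G0])
        fix g assume g: "g \<in> G"
        have "\<forall>j. \<exists>v. v \<in> C j \<and> (\<forall>t\<in>{1..n}. \<bar>tree_at v t y - g (tree_at z t y)\<bar> \<le> gj j)"
          using Ccov g y unfolding seq_cover_def by blast
        then obtain V where V: "\<And>j. V j \<in> C j \<and> (\<forall>t\<in>{1..n}. \<bar>tree_at (V j) t y - g (tree_at z t y)\<bar> \<le> gj j)"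
          by metis
        have "Phi g y \<le> Ts \<delta> K n p (\<lambda>t u. clip 1 (shr \<gamma> (V 0 t u))) y
            + Zs \<delta> n p (\<lambda>t u. clip \<gamma> (V 0 t u - clip 1 (shr \<gamma> (V 0 t u)))) y
            + (\<Sum>j<m. Zs \<delta> n p (\<lambda>t u. clip (3 * gj (Suc j)) (V (Suc j) t u - V j t u)) y)
            + real n * (gj m / \<delta>)"
          unfolding Phi_def
          by (rule pointwise_full[OF d(1) _ g0 _ _ gj0 gjsA]) (use K0 Gb g V gjpos[of m] in \<open>auto simp: less_imp_le\<close>)
        also have "Ts \<delta> K n p (\<lambda>t u. clip 1 (shr \<gamma> (V 0 t u))) y \<le> MT y"
          unfolding MT_def T0_def by (rule Max_ge) (use Cfin V in auto)
        also have "Zs \<delta> n p (\<lambda>t u. clip \<gamma> (V 0 t u - clip 1 (shr \<gamma> (V 0 t u)))) y \<le> M0 y"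
          unfolding M0_def W0_def by (rule Max_ge) (use Cfin V in auto)
        also have "(\<Sum>j<m. Zs \<delta> n p (\<lambda>t u. clip (3 * gj (Suc j)) (V (Suc j) t u - V j t u)) y) \<le> (\<Sum>j<m. Ml j y)"
        proof (rule sum_mono)
          fix j assume "j \<in> {..<m}"
          have "(\<lambda>t u. clip (3 * gj (Suc j)) (V (Suc j) t u - V j t u)) \<in> Wl j"
            unfolding Wl_def using V[of j] V[of "Suc j"] by (auto intro!: image_eqI[where x = "(V (Suc j), V j)"])
          then show "Zs \<delta> n p (\<lambda>t u. clip (3 * gj (Suc j)) (V (Suc j) t u - V j t u)) y \<le> Ml j y"
            unfolding Ml_def by (intro Max_ge) (use Wlfin in auto)
        qed
        finally show "Phi g y \<le> MT y + M0 y + (\<Sum>j<m. Ml j y) + real n * (gj m / \<delta>)" by simp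
      qed
      have E1: "LHS \<le> tree_expect n p (\<lambda>y. MT y + M0 y + (\<Sum>j<m. Ml j y) + real n * (gj m / \<delta>))"
        unfolding LHS_def by (rule tree_expect_mono[OF p01]) (rule pw)
      also have "\<dots> = tree_expect n p MT + tree_expect n p M0 + (\<Sum>j<m. tree_expect n p (Ml j)) + real n * (gj m / \<delta>)"
        by (simp add: tree_expect_add tree_expect_const tree_expect_sum)
      finally have E1: "LHS \<le> tree_expect n p MT + tree_expect n p M0 + (\<Sum>j<m. tree_expect n p (Ml j)) + real n * (gj m / \<delta>)" .
      have E2: "tree_expect n p M0 \<le> integral {gj (Suc 0)..gj 0} h"
      proof -
        have "tree_expect n p M0 \<le> (\<gamma> / 2) * h \<gamma>"
          using level0_exp_bound[OF p01 d g0 Cfin[of 0] Cne[of 0]] unfolding M0_def W0_def h_def Lf_def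
          using Ccard[of 0] gj0 by simp
        also have "\<dots> = (gj 0 - gj (Suc 0)) * h (gj 0)" using gj0 gjs[of 0] by simp
        also have "\<dots> \<le> integral {gj (Suc 0)..gj 0} h"
        proof (rule antitone_integral_lower)
          fix x y assume "gj (Suc 0) \<le> x" "x \<le> y" "y \<le> gj 0"
          then show "h y \<le> h x" using gjpos[of "Suc 0"] by (intro h_anti) auto
        qed (use gjs[of 0] gjpos[of "Suc 0"] in simp)
        finally show ?thesis .
      qed
      have E3: "(\<Sum>j<m. tree_expect n p (Ml j)) \<le> (\<Sum>j<m. integral {gj (Suc (Suc j))..gj (Suc j)} h)"
      proof (rule sum_mono)
        fix j assume "j \<in> {..<m}"
        have cc: "card (C j) \<le> card (C (Suc j))"
          using Ccard Nmono[OF gjpos[of "Suc j"]] gjs[of j] gjpos[of "Suc j"] by simp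
        have "tree_expect n p (Ml j) \<le> (gj (Suc j) / 2) * h (gj (Suc j))"
          using levelj_exp_bound[OF p01 d gjpos[of "Suc j"] Cfin[of "Suc j"] Cne[of "Suc j"] Cfin[of j] Cne[of j] cc]
          unfolding Ml_def Wl_def h_def Lf_def using Ccard[of "Suc j"] by simp
        also have "\<dots> = (gj (Suc j) - gj (Suc (Suc j))) * h (gj (Suc j))" using gjs[of "Suc j"] by simp
        also have "\<dots> \<le> integral {gj (Suc (Suc j))..gj (Suc j)} h"
        proof (rule antitone_integral_lower)
          fix x y assume "gj (Suc (Suc j)) \<le> x" "x \<le> y" "y \<le> gj (Suc j)"
          then show "h y \<le> h x" using gjpos[of "Suc (Suc j)"] by (intro h_anti) auto
        qed (use gjs[of "Suc j"] gjpos[of "Suc (Suc j)"] in simp)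
        finally show "tree_expect n p (Ml j) \<le> integral {gj (Suc (Suc j))..gj (Suc j)} h" .
      qed
      have "integral {gj (Suc 0)..gj 0} h + (\<Sum>j<m. integral {gj (Suc (Suc j))..gj (Suc j)} h)
          = (\<Sum>j\<le>m. integral {gj (Suc j)..gj j} h)"
        by (simp add: lessThan_Suc_atMost[symmetric] sum.lessThan_Suc_shift del: sum.lessThan_Suc)
      also have "\<dots> = integral {gj (Suc m)..\<gamma>} h"
        unfolding gj_def by (rule dyadic_integral_sum[OF g0 hint]) (use gjpos[of "Suc m"] in \<open>simp add: gj_def\<close>)
      finally have E4: "integral {gj (Suc 0)..gj 0} h + (\<Sum>j<m. integral {gj (Suc (Suc j))..gj (Suc j)} h) = integral {gj (Suc m)..\<gamma>} h" .
      have E5: "integral {gj (Suc m)..\<gamma>} h \<le> integral {\<alpha>..\<gamma>} h"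
      proof -
        have "integral {\<alpha>..gj (Suc m)} h + integral {gj (Suc m)..\<gamma>} h = integral {\<alpha>..\<gamma>} h"
          by (rule Henstock_Kurzweil_Integration.integral_combine[OF am _ hint[OF a0(1)]])
             (use gjle[of "Suc m"] in simp)
        moreover have "0 \<le> integral {\<alpha>..gj (Suc m)} h"
          by (rule integral_nonneg[OF hint[OF a0(1)]]) (use h0 a0 in auto)
        ultimately show ?thesis by linarith
      qed
      have E6: "real n * (gj m / \<delta>) \<le> 4 * real n * \<alpha> / \<delta>"
      proof -
        have "gj m \<le> 4 * \<alpha>" using am2 gjs[of m] gjs[of "Suc m"] by simp
        then have "real n * gj m \<le> real n * (4 * \<alpha>)" by (intro mult_left_mono) auto
        then show ?thesis using d by (simp add: divide_right_mono)
      qed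
      show ?thesis using ET ieq E1 E2 E3 E4 E5 E6 by linarith
    qed
  qed
  have "LHS - first \<le> (INF \<alpha>\<in>{0<..\<gamma>}. 4 * real n * \<alpha> / \<delta> + 30 * sqrt (2 * real n / \<delta>) *
               integral {\<alpha>..\<gamma>} (\<lambda>\<rho>. sqrt (Lf \<rho>)) + (8 / \<delta>) * integral {\<alpha>..\<gamma>} Lf)"
    by (rule cINF_greatest) (use g0 main in auto)
  then show ?thesis unfolding LHS_def first_def Phi_def Lf_def Nn_def by simp
qed


end
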